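(* Let $\mathcal O$ be a cyclic operad with $\mathcal O[m]$ finite-dimensional for all $m$. Then on $\mathcal{OG}$: (a) $\partial_H^2=0$; (b) $\partial_H\partial_E+\partial_E\partial_H=0$.
   Context: Work over $\mathbb R$. $\mathcal O$ is a cyclic operad; $\mathcal S[m]$ ($m\ge2$) its spaces of spiders (coinvariants of $\bigoplus_L\mathcal O[m-1]$ over labelings $L$ of the legs of an $m$-star), with mating $(S,\lambda)\circ(\mu,T)$ induced by operad composition along legs $\lambda,\mu$. An $\mathcal O$-graph is an oriented graph (vertex ordering plus edge directions, up to even changes) without univalent vertices, each vertex colored by a spider whose legs are the incident half-edges; $\mathcal{OG}$ is spanned by $\mathcal O$-graphs modulo orientation reversal $=-1$ and vertex-linearity. For an $\mathcal O$-graph $\mathbf X$ and an edge $e$: $\mathbf X_e=0$ if $e$ is a loop; otherwise, with orientation represented so that the endpoints $v,w$ of $e$ are first and second and $e$ is directed $v\to w$, $\mathbf X_e$ collapses $e$, colors the new vertex by the mating of the spiders at $v,w$ along the half-edges of $e$, and puts it first; $\partial_E\mathbf X=\sum_e\mathbf X_e$. For a pairing $\pi$ of the half-edges $H(X)$, $X^\pi$ is obtained by regluing half-edges according to $\pi$; the union of the chord diagrams of $\pi$ and of the standard pairing $\{x,\bar x\}$ is a union of circles, and choosing a representative orientation of $X$ whose edge directions are coherent around each circle, $X^\pi$ gets induced edge directions and the same vertex order; $\mathbf X^\pi$ is the resulting $\mathcal O$-graph. For half-edges $x,y$, $\pi_{xy}$ is the pairing agreeing with the standard one except that it pairs $\{x,y\}$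 and $\{\bar x,\bar y\}$. The H-boundary is $\partial_H\mathbf X=\sum_{x,y,\ x\neq\bar y}(\mathbf X^{\pi_{xy}})_{x\cup y}$, the sum over pairs of distinct half-edges $x,y$ with $x\ne\bar y$, where $x\cup y$ denotes the edge of $X^{\pi_{xy}}$ formed by $x$ and $y$. *)

theory Defs
  imports Complex_Main "HOL-Combinatorics.Permutations" "HOL-Library.Function_Algebras"
begin

text \<open>A cyclic operad over the reals is presented by its components Op(S), one real vector
space for every finite set S of "legs" (here: labels of type 'h), all realised as subspaces of
one ambient real vector space 'v.  cmp S x T y a b is the partial composition of a in Op(S)
with b in Op(T) along the legs x of S and y of T (S, T disjoint), landing in
Op((S - {x}) \<union> (T - {y})); ren \<sigma> S a is the action of a bijection \<sigma> : S \<rightarrow> \<sigma> ` S;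
un x y is the unit in Op({x,y}).  Op[n] of the paper is Op(S) for |S| = n + 1.\<close>

definition cyclic_operad ::
  "('h set \<Rightarrow> 'v::real_vector set) \<Rightarrow> ('h set \<Rightarrow> 'h \<Rightarrow> 'h set \<Rightarrow> 'h \<Rightarrow> 'v \<Rightarrow> 'v \<Rightarrow> 'v)
    \<Rightarrow> (('h \<Rightarrow> 'h) \<Rightarrow> 'h set \<Rightarrow> 'v \<Rightarrow> 'v) \<Rightarrow> ('h \<Rightarrow> 'h \<Rightarrow> 'v) \<Rightarrow> bool" where
  "cyclic_operad Op cmp ren un \<longleftrightarrow>
    (\<forall>S. finite S \<longrightarrow> subspace (Op S)) \<and>
    (\<forall>S T x y a b. finite S \<and> finite T \<and> S \<inter> T = {} \<and> x \<in> S \<and> y \<in> T \<and> a \<in> Op S \<and> b \<in> Op T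
        \<longrightarrow> cmp S x T y a b \<in> Op ((S - {x}) \<union> (T - {y}))) \<and>
    (\<forall>S T x y a a' b r. finite S \<and> finite T \<and> S \<inter> T = {} \<and> x \<in> S \<and> y \<in> T \<and>
        a \<in> Op S \<and> a' \<in> Op S \<and> b \<in> Op T
        \<longrightarrow> cmp S x T y (a + r *\<^sub>R a') b = cmp S x T y a b + r *\<^sub>R cmp S x T y a' b) \<and>
    (\<forall>S T x y a b b' r. finite S \<and> finite T \<and> S \<inter> T = {} \<and> x \<in> S \<and> y \<in> T \<and>
        a \<in> Op S \<and> b \<in> Op T \<and> b' \<in> Op T
        \<longrightarrow> cmp S x T y a (b + r *\<^sub>R b') = cmp S x T y a b + r *\<^sub>R cmp S x T y a b') \<and>
    (\<forall>\<sigma> S a. finite S \<and> inj_on \<sigma> S \<and> a \<in> Op S \<longrightarrow> ren \<sigma> S a \<in> Op (\<sigma> ` S)) \<and>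
    (\<forall>\<sigma> S a a' r. finite S \<and> inj_on \<sigma> S \<and> a \<in> Op S \<and> a' \<in> Op S
        \<longrightarrow> ren \<sigma> S (a + r *\<^sub>R a') = ren \<sigma> S a + r *\<^sub>R ren \<sigma> S a') \<and>
    (\<forall>S a. finite S \<and> a \<in> Op S \<longrightarrow> ren id S a = a) \<and>
    (\<forall>\<sigma> \<tau> S a. finite S \<and> inj_on \<sigma> S \<and> inj_on \<tau> (\<sigma> ` S) \<and> a \<in> Op S
        \<longrightarrow> ren \<tau> (\<sigma> ` S) (ren \<sigma> S a) = ren (\<tau> \<circ> \<sigma>) S a) \<and>
    (\<forall>\<sigma> \<tau> S a. finite S \<and> inj_on \<sigma> S \<and> (\<forall>z\<in>S. \<sigma> z = \<tau> z) \<and> a \<in> Op S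
        \<longrightarrow> ren \<sigma> S a = ren \<tau> S a) \<and>
    (\<forall>\<sigma> S T x y a b. finite S \<and> finite T \<and> S \<inter> T = {} \<and> x \<in> S \<and> y \<in> T \<and> a \<in> Op S \<and> b \<in> Op T
        \<and> inj_on \<sigma> (S \<union> T)
        \<longrightarrow> ren \<sigma> ((S - {x}) \<union> (T - {y})) (cmp S x T y a b)
            = cmp (\<sigma> ` S) (\<sigma> x) (\<sigma> ` T) (\<sigma> y) (ren \<sigma> S a) (ren \<sigma> T b)) \<and>
    (\<forall>S T x y a b. finite S \<and> finite T \<and> S \<inter> T = {} \<and> x \<in> S \<and> y \<in> T \<and> a \<in> Op S \<and> b \<in> Op T
        \<longrightarrow> cmp S x T y a b = cmp T y S x b a) \<and>
    (\<forall>S T U x y z w a b c. finite S \<and> finite T \<and> finite U \<and>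
        S \<inter> T = {} \<and> S \<inter> U = {} \<and> T \<inter> U = {} \<and>
        x \<in> S \<and> y \<in> T \<and> z \<in> T \<and> y \<noteq> z \<and> w \<in> U \<and> a \<in> Op S \<and> b \<in> Op T \<and> c \<in> Op U
        \<longrightarrow> cmp ((S - {x}) \<union> (T - {y})) z U w (cmp S x T y a b) c
            = cmp S x ((T - {z}) \<union> (U - {w})) y a (cmp T z U w b c)) \<and>
    (\<forall>x y. x \<noteq> y \<longrightarrow> un x y \<in> Op {x, y}) \<and>
    (\<forall>x y. un x y = un y x) \<and>
    (\<forall>\<sigma> x y. x \<noteq> y \<and> inj_on \<sigma> {x, y} \<longrightarrow> ren \<sigma> {x, y} (un x y) = un (\<sigma> x) (\<sigma> y)) \<and>
    (\<forall>x y T z a. finite T \<and> x \<noteq> y \<and> x \<notin> T \<and> y \<notin> T \<and> z \<in> T \<and> a \<in> Op T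
        \<longrightarrow> cmp {x, y} y T z (un x y) a = ren (id(z := x)) T a)"

definition finite_dimensional_components :: "('h set \<Rightarrow> 'v::real_vector set) \<Rightarrow> bool" where
  "finite_dimensional_components Op \<longleftrightarrow> (\<forall>S. finite S \<longrightarrow> (\<exists>B. finite B \<and> Op S \<subseteq> span B))"

text \<open>A (representative of an) Op-graph is a tuple (V, \<iota>, T, c):
 \<^item> V: the list of vertices in their chosen order; each vertex is the (finite) set of its
   half-edges, so the half-edge set is H = \<Union>(set V);
 \<^item> \<iota>: the fixed-point-free involution of H pairing each half-edge x with x-bar
   (the edges are the orbits {x, \<iota> x}); \<iota> is the identity off H;
 \<^item> T: the set of tails, containing exactly one half-edge of each edge (edge directions:
   the edge {t, \<iota> t} with t \<in> T is directed from the vertex of t to the vertex of \<iota> t);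
 \<^item> c: the colouring, c v \<in> Op(v) being the spider at v, whose legs are the half-edges at v;
   c is 0 off the vertices.\<close>

type_synonym ('h, 'v) ograph = "'h set list \<times> ('h \<Rightarrow> 'h) \<times> 'h set \<times> ('h set \<Rightarrow> 'v)"

definition hedges :: "'h set list \<Rightarrow> 'h set" where
  "hedges V = \<Union> (set V)"

definition ograph_wf :: "('h set \<Rightarrow> 'v::real_vector set) \<Rightarrow> ('h, 'v) ograph \<Rightarrow> bool" where
  "ograph_wf Op X \<longleftrightarrow> (case X of (V, \<iota>, T, c) \<Rightarrow>
     distinct V \<and>
     (\<forall>v\<in>set V. finite v \<and> 2 \<le> card v) \<and>
     (\<forall>u\<in>set V. \<forall>v\<in>set V. u \<noteq> v \<longrightarrow> u \<inter> v = {}) \<and>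
     (\<forall>h\<in>hedges V. \<iota> h \<in> hedges V \<and> \<iota> h \<noteq> h \<and> \<iota> (\<iota> h) = h) \<and>
     (\<forall>h. h \<notin> hedges V \<longrightarrow> \<iota> h = h) \<and>
     T \<subseteq> hedges V \<and> (\<forall>h\<in>hedges V. h \<in> T \<longleftrightarrow> \<iota> h \<notin> T) \<and>
     (\<forall>v\<in>set V. c v \<in> Op v) \<and> (\<forall>u. u \<notin> set V \<longrightarrow> c u = 0))"

text \<open>Formal linear combinations are functions into the reals (pointwise addition from
Function_Algebras); only finitely supported ones occur.\<close>

definition gen :: "'g \<Rightarrow> 'g \<Rightarrow> real" where
  "gen g = (\<lambda>g'. if g' = g then 1 else 0)"

definition fscale :: "real \<Rightarrow> ('g \<Rightarrow> real) \<Rightarrow> 'g \<Rightarrow> real" where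
  "fscale r f = (\<lambda>g. r * f g)"

definition fspan :: "('g \<Rightarrow> real) set \<Rightarrow> ('g \<Rightarrow> real) set" where
  "fspan R = {f. \<exists>A cf. finite A \<and> A \<subseteq> R \<and> f = (\<Sum>r\<in>A. fscale (cf r) r)}"

definition lin_ext :: "('g \<Rightarrow> 'g' \<Rightarrow> real) \<Rightarrow> ('g \<Rightarrow> real) \<Rightarrow> 'g' \<Rightarrow> real" where
  "lin_ext D f = (\<Sum>g\<in>{g. f g \<noteq> 0}. fscale (f g) (D g))"

text \<open>Sign of the reordering of a list of distinct elements: ys ! i = xs ! p i.\<close>
definition list_sign :: "'a list \<Rightarrow> 'a list \<Rightarrow> real" where
  "list_sign xs ys =
     (if distinct xs \<and> distinct ys \<and> set xs = set ys
      then of_int (sign (\<lambda>i. if i < length xs then (THE j. j < length xs \<and> xs ! j = ys ! i) else i))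
      else 0)"

definition relabel :: "(('h \<Rightarrow> 'h) \<Rightarrow> 'h set \<Rightarrow> 'v \<Rightarrow> 'v) \<Rightarrow> ('h \<Rightarrow> 'h)
    \<Rightarrow> ('h, 'v::zero) ograph \<Rightarrow> ('h, 'v) ograph" where
  "relabel ren \<sigma> X = (case X of (V, \<iota>, T, c) \<Rightarrow>
     (map ((`) \<sigma>) V, \<sigma> \<circ> \<iota> \<circ> inv \<sigma>, \<sigma> ` T,
      (\<lambda>u. if u \<in> set (map ((`) \<sigma>) V) then ren \<sigma> (inv \<sigma> ` u) (c (inv \<sigma> ` u)) else 0)))"

text \<open>The relations defining OG: change of orientation (sign of the vertex permutation times
(-1)^(number of reversed edges)), vertex-linearity, and isomorphism (relabelling).\<close>
definition og_rel :: "('h set \<Rightarrow> 'v::real_vector set) \<Rightarrow> (('h \<Rightarrow> 'h) \<Rightarrow> 'h set \<Rightarrow> 'v \<Rightarrow> 'v)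
    \<Rightarrow> (('h, 'v) ograph \<Rightarrow> real) set" where
  "og_rel Op ren =
     {gen (V', \<iota>, T', c) - fscale (list_sign V V' * (-1) ^ card (T - T')) (gen (V, \<iota>, T, c))
        | V V' \<iota> T T' c. ograph_wf Op (V, \<iota>, T, c) \<and> ograph_wf Op (V', \<iota>, T', c) \<and> set V' = set V}
   \<union> {gen (V, \<iota>, T, c(v := a + r *\<^sub>R b)) - gen (V, \<iota>, T, c(v := a)) - fscale r (gen (V, \<iota>, T, c(v := b)))
        | V \<iota> T c v a b r. ograph_wf Op (V, \<iota>, T, c) \<and> v \<in> set V \<and> a \<in> Op v \<and> b \<in> Op v}
   \<union> {gen (relabel ren \<sigma> X) - gen X | \<sigma> X. bij \<sigma> \<and> ograph_wf Op X}"

text \<open>The space OG is the span of the well-formed generators modulo the span of og_rel;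
"f = 0 in OG" means f \<in> fspan (og_rel Op ren).\<close>
definition og_gens :: "('h set \<Rightarrow> 'v::real_vector set) \<Rightarrow> (('h, 'v) ograph \<Rightarrow> real) set" where
  "og_gens Op = {gen X | X. ograph_wf Op X}"

text \<open>X_e for the edge e = {t, \<iota> t} with t taken as the tail: v = vertex of t, w = vertex of
\<iota> t; the orientation is first rewritten as (v # w # rest, T) (sign list_sign), e is collapsed,
the new vertex (v \<union> w) - e is put first and coloured by the mating of the spiders at v and w
along t and \<iota> t.\<close>
definition contract :: "('h set \<Rightarrow> 'h \<Rightarrow> 'h set \<Rightarrow> 'h \<Rightarrow> 'v \<Rightarrow> 'v \<Rightarrow> 'v)
    \<Rightarrow> ('h, 'v::real_vector) ograph \<Rightarrow> 'h \<Rightarrow> ('h, 'v) ograph \<Rightarrow> real" where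
  "contract cmp X t = (case X of (V, \<iota>, T, c) \<Rightarrow>
     (let v = (THE v. v \<in> set V \<and> t \<in> v); w = (THE w. w \<in> set V \<and> \<iota> t \<in> w) in
      if v = w then 0 else
      (let n = (v \<union> w) - {t, \<iota> t};
           rest = filter (\<lambda>u. u \<noteq> v \<and> u \<noteq> w) V;
           \<iota>' = (\<lambda>h. if h = t \<or> h = \<iota> t then h else \<iota> h);
           c' = (\<lambda>u. if u = n then cmp v t w (\<iota> t) (c v) (c w)
                     else if u \<in> set rest then c u else 0)
       in fscale (list_sign V (v # w # rest)) (gen (n # rest, \<iota>', T - {t}, c')))))"

definition dE :: "('h set \<Rightarrow> 'h \<Rightarrow> 'h set \<Rightarrow> 'h \<Rightarrow> 'v \<Rightarrow> 'v \<Rightarrow> 'v)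
    \<Rightarrow> ('h, 'v::real_vector) ograph \<Rightarrow> ('h, 'v) ograph \<Rightarrow> real" where
  "dE cmp X = (case X of (V, \<iota>, T, c) \<Rightarrow> (\<Sum>t\<in>T. contract cmp X t))"

text \<open>X^{\<pi>_xy}: x is paired with y and \<iota> x with \<iota> y.  The representative orientation coherent
around the circle x, \<iota> x, \<iota> y, y has tails x and \<iota> y (reached from T by reversing the edges
whose tail is not already x resp. \<iota> y); the induced directions of the new edges have tails
\<iota> x (edge {\<iota> x, \<iota> y}) and y (edge x \<union> y = {x, y}).\<close>
definition reglue :: "('h, 'v) ograph \<Rightarrow> 'h \<Rightarrow> 'h \<Rightarrow> real \<times> ('h, 'v) ograph" where
  "reglue X x y = (case X of (V, \<iota>, T, c) \<Rightarrow>
     ((-1) ^ card ({x, \<iota> y} - T),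
      (V, (\<lambda>h. if h = x then y else if h = y then x else if h = \<iota> x then \<iota> y
               else if h = \<iota> y then \<iota> x else \<iota> h),
       (T - {x, \<iota> x, y, \<iota> y}) \<union> {\<iota> x, y}, c)))"

text \<open>H-boundary: sum over (ordered) pairs of distinct half-edges x, y with x \<noteq> \<iota> y of
(X^{\<pi>_xy})_{x \<union> y}; the edge x \<union> y has tail y in X^{\<pi>_xy}.\<close>
definition dH :: "('h set \<Rightarrow> 'h \<Rightarrow> 'h set \<Rightarrow> 'h \<Rightarrow> 'v \<Rightarrow> 'v \<Rightarrow> 'v)
    \<Rightarrow> ('h, 'v::real_vector) ograph \<Rightarrow> ('h, 'v) ograph \<Rightarrow> real" where
  "dH cmp X = (case X of (V, \<iota>, T, c) \<Rightarrow>
     (\<Sum>(x, y)\<in>{(x, y). x \<in> hedges V \<and> y \<in> hedges V \<and> x \<noteq> y \<and> x \<noteq> \<iota> y}.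
        fscale (fst (reglue X x y)) (contract cmp (snd (reglue X x y)) y)))"

end

theory Submission
  imports Defs
begin


definition fsupp :: "('g \<Rightarrow> real) \<Rightarrow> bool" where
  "fsupp f \<longleftrightarrow> finite {g. f g \<noteq> 0}"

lemma fscale_apply[simp]: "fscale r f g = r * f g" by (simp add: fscale_def)
lemma gen_apply: "gen g g' = (if g' = g then 1 else 0)" by (simp add: gen_def)

lemma fsupp_zero[simp]: "fsupp 0" by (simp add: fsupp_def)
lemma fsupp_gen[simp]: "fsupp (gen g)" by (simp add: fsupp_def gen_def)
lemma fsupp_add[simp]: "fsupp f \<Longrightarrow> fsupp g \<Longrightarrow> fsupp (f + g)"
  unfolding fsupp_def by (rule finite_subset[of _ "{g. f g \<noteq> 0} \<union> {x. g x \<noteq> 0}"]) auto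
lemma fsupp_fscale[simp]: "fsupp f \<Longrightarrow> fsupp (fscale r f)"
  unfolding fsupp_def by (rule finite_subset[of _ "{g. f g \<noteq> 0}"]) auto
lemma fsupp_neg[simp]: "fsupp f \<Longrightarrow> fsupp (- f)"
  unfolding fsupp_def by simp
lemma fsupp_diff[simp]: "fsupp f \<Longrightarrow> fsupp g \<Longrightarrow> fsupp (f - g)"
  unfolding fsupp_def by (rule finite_subset[of _ "{g. f g \<noteq> 0} \<union> {x. g x \<noteq> 0}"]) auto
lemma fsupp_sum[simp]: "(\<And>i. i \<in> I \<Longrightarrow> fsupp (F i)) \<Longrightarrow> fsupp (\<Sum>i\<in>I. F i)"
  by (induction I rule: infinite_finite_induct) auto

lemma sum_apply_fun: "(\<Sum>i\<in>I. F i) g = (\<Sum>i\<in>I. F i g)"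
  by (induction I rule: infinite_finite_induct) auto

lemma fscale_add: "fscale r (f + g) = fscale r f + fscale r g"
  by (auto simp: fun_eq_iff algebra_simps)
lemma fscale_sum: "fscale r (\<Sum>i\<in>I. F i) = (\<Sum>i\<in>I. fscale r (F i))"
  by (simp add: fun_eq_iff sum_apply_fun sum_distrib_left)
lemma fscale_fscale[simp]: "fscale r (fscale s f) = fscale (r * s) f"
  by (auto simp: fun_eq_iff)
lemma fscale_zero[simp]: "fscale r 0 = 0" "fscale 0 f = 0"
  by (auto simp: fun_eq_iff)
lemma fscale_one[simp]: "fscale 1 f = f" by (auto simp: fun_eq_iff)

lemma lin_ext_superset:
  assumes "finite A" "{g. f g \<noteq> 0} \<subseteq> A"
  shows "lin_ext D f = (\<Sum>g\<in>A. fscale (f g) (D g))"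
  unfolding lin_ext_def
  by (rule sum.mono_neutral_left) (use assms in auto)

lemma lin_ext_add:
  assumes "fsupp f" "fsupp g"
  shows "lin_ext D (f + g) = lin_ext D f + lin_ext D g"
proof -
  let ?A = "{x. f x \<noteq> 0} \<union> {x. g x \<noteq> 0}"
  have fin: "finite ?A" using assms by (auto simp: fsupp_def)
  have "lin_ext D (f + g) = (\<Sum>x\<in>?A. fscale ((f + g) x) (D x))"
    by (rule lin_ext_superset) (use fin in auto)
  also have "\<dots> = (\<Sum>x\<in>?A. fscale (f x) (D x)) + (\<Sum>x\<in>?A. fscale (g x) (D x))"
    by (simp add: sum.distrib[symmetric] fun_eq_iff sum_apply_fun algebra_simps)
  also have "\<dots> = lin_ext D f + lin_ext D g"
    by (subst (1 2) lin_ext_superset[of ?A]) (use fin in auto)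
  finally show ?thesis .
qed

lemma lin_ext_fscale:
  assumes "fsupp f"
  shows "lin_ext D (fscale r f) = fscale r (lin_ext D f)"
proof -
  let ?A = "{x. f x \<noteq> 0}"
  have fin: "finite ?A" using assms by (auto simp: fsupp_def)
  have "lin_ext D (fscale r f) = (\<Sum>x\<in>?A. fscale (r * f x) (D x))"
    by (subst lin_ext_superset[of ?A]) (use fin in auto)
  also have "\<dots> = fscale r (lin_ext D f)"
    by (subst lin_ext_superset[of ?A]) (use fin in \<open>auto simp: fscale_sum\<close>)
  finally show ?thesis .
qed

lemma lin_ext_zero[simp]: "lin_ext D 0 = 0"
  by (simp add: lin_ext_def)

lemma lin_ext_gen[simp]: "lin_ext D (gen g) = D g"
  by (subst lin_ext_superset[of "{g}"]) (auto simp: gen_def)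

lemma lin_ext_sum:
  assumes "\<And>i. i \<in> I \<Longrightarrow> fsupp (F i)"
  shows "lin_ext D (\<Sum>i\<in>I. F i) = (\<Sum>i\<in>I. lin_ext D (F i))"
  using assms by (induction I rule: infinite_finite_induct) (auto simp: lin_ext_add)

lemma fspan_zero[simp]: "0 \<in> fspan R"
  unfolding fspan_def by (rule CollectI, rule exI[of _ "{}"]) auto

lemma fspan_base: "r \<in> R \<Longrightarrow> r \<in> fspan R"
  unfolding fspan_def by (rule CollectI, rule exI[of _ "{r}"], rule exI[of _ "\<lambda>_. 1"]) auto

lemma fspan_fscale: "f \<in> fspan R \<Longrightarrow> fscale a f \<in> fspan R"
  unfolding fspan_def
proof (clarify)
  fix A cf assume "finite A" "A \<subseteq> R"
  then show "\<exists>A' cf'. finite A' \<and> A' \<subseteq> R \<and> fscale a (\<Sum>r\<in>A. fscale (cf r) r) = (\<Sum>r\<in>A'. fscale (cf' r) r)"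
    by (intro exI[of _ A] exI[of _ "\<lambda>r. a * cf r"]) (simp add: fscale_sum)
qed

lemma fspan_add: "f \<in> fspan R \<Longrightarrow> g \<in> fspan R \<Longrightarrow> f + g \<in> fspan R"
  unfolding fspan_def
proof (clarify)
  fix A cf B cg assume A: "finite A" "A \<subseteq> R" and B: "finite B" "B \<subseteq> R"
  define ch :: "_ \<Rightarrow> real" where "ch r = (if r \<in> A then cf r else 0) + (if r \<in> B then cg r else 0)" for r
  have "(\<Sum>r\<in>A \<union> B. fscale (ch r) r) = (\<Sum>r\<in>A \<union> B. fscale (if r \<in> A then cf r else 0) r) + (\<Sum>r\<in>A \<union> B. fscale (if r \<in> B then cg r else 0) r)"
    by (simp add: ch_def sum.distrib[symmetric] fun_eq_iff sum_apply_fun algebra_simps)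
  also have "(\<Sum>r\<in>A \<union> B. fscale (if r \<in> A then cf r else 0) r) = (\<Sum>r\<in>A. fscale (cf r) r)"
    by (rule sum.mono_neutral_cong_right) (use A B in auto)
  also have "(\<Sum>r\<in>A \<union> B. fscale (if r \<in> B then cg r else 0) r) = (\<Sum>r\<in>B. fscale (cg r) r)"
    by (rule sum.mono_neutral_cong_right) (use A B in auto)
  finally have eq: "(\<Sum>r\<in>A \<union> B. fscale (ch r) r) = (\<Sum>r\<in>A. fscale (cf r) r) + (\<Sum>r\<in>B. fscale (cg r) r)" .
  show "\<exists>A' cf'. finite A' \<and> A' \<subseteq> R \<and> (\<Sum>r\<in>A. fscale (cf r) r) + (\<Sum>r\<in>B. fscale (cg r) r) = (\<Sum>r\<in>A'. fscale (cf' r) r)"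
    apply (rule exI[of _ "A \<union> B"], rule exI[of _ ch])
    using A B eq by simp
qed

lemma fspan_sum: "(\<And>i. i \<in> I \<Longrightarrow> F i \<in> fspan R) \<Longrightarrow> (\<Sum>i\<in>I. F i) \<in> fspan R"
  by (induction I rule: infinite_finite_induct) (auto intro: fspan_add)

lemma fspan_cong: "f \<in> fspan R \<Longrightarrow> f = g \<Longrightarrow> g \<in> fspan R" by simp

lemma fspan_fsupp: "(\<And>r. r \<in> R \<Longrightarrow> fsupp r) \<Longrightarrow> f \<in> fspan R \<Longrightarrow> fsupp f"
  unfolding fspan_def by (auto intro!: fsupp_sum fsupp_fscale)

lemma sum_involution_span:
  assumes fin: "finite S" and inv: "\<And>i. i \<in> S \<Longrightarrow> \<phi> i \<in> S" "\<And>i. i \<in> S \<Longrightarrow> \<phi> (\<phi> i) = i"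
    and pair: "\<And>i. i \<in> S \<Longrightarrow> F i + F (\<phi> i) \<in> fspan R"
  shows "(\<Sum>i\<in>S. F i) \<in> fspan R"
proof -
  have bij: "bij_betw \<phi> S S"
    by (rule bij_betwI[of _ _ _ \<phi>]) (use inv in auto)
  have "(\<Sum>i\<in>S. F (\<phi> i)) = (\<Sum>i\<in>S. F i)"
    using sum.reindex_bij_betw[OF bij, of F] .
  then have "(\<Sum>i\<in>S. F i + F (\<phi> i)) = fscale 2 (\<Sum>i\<in>S. F i)"
    by (simp add: sum.distrib fun_eq_iff)
  moreover have "(\<Sum>i\<in>S. F i + F (\<phi> i)) \<in> fspan R"
    by (rule fspan_sum) (use pair in auto)
  ultimately have "fscale 2 (\<Sum>i\<in>S. F i) \<in> fspan R" by simp
  from fspan_fscale[OF this, of "1/2"] show ?thesis by simp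
qed

lemma sum_bij_span:
  assumes bij: "bij_betw \<phi> S S'"
    and pair: "\<And>i. i \<in> S \<Longrightarrow> F i + G (\<phi> i) \<in> fspan R"
  shows "(\<Sum>i\<in>S. F i) + (\<Sum>j\<in>S'. G j) \<in> fspan R"
proof -
  have "(\<Sum>j\<in>S'. G j) = (\<Sum>i\<in>S. G (\<phi> i))"
    using sum.reindex_bij_betw[OF bij, of G] by simp
  then have "(\<Sum>i\<in>S. F i) + (\<Sum>j\<in>S'. G j) = (\<Sum>i\<in>S. F i + G (\<phi> i))"
    by (simp add: sum.distrib)
  moreover have "(\<Sum>i\<in>S. F i + G (\<phi> i)) \<in> fspan R"
    by (rule fspan_sum) (use pair in auto)
  ultimately show ?thesis by simp
qed


definition pidx :: "'a list \<Rightarrow> 'a \<Rightarrow> nat" where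
  "pidx xs y = (THE j. j < length xs \<and> xs ! j = y)"

lemma pidx_props:
  assumes "distinct xs" "y \<in> set xs"
  shows "pidx xs y < length xs" "xs ! pidx xs y = y"
proof -
  have "\<exists>!j. j < length xs \<and> xs ! j = y" using distinct_Ex1[OF assms] .
  from theI'[OF this] show "pidx xs y < length xs" "xs ! pidx xs y = y"
    unfolding pidx_def by auto
qed

lemma pidx_nth:
  assumes "distinct xs" "j < length xs"
  shows "pidx xs (xs ! j) = j"
proof -
  have "\<exists>!i. i < length xs \<and> xs ! i = xs ! j" using distinct_Ex1[OF assms(1)] assms(2) by auto
  then show ?thesis unfolding pidx_def using assms by (intro the1_equality) auto
qed

definition pm :: "'a list \<Rightarrow> 'a list \<Rightarrow> nat \<Rightarrow> nat" where
  "pm xs ys = (\<lambda>i. if i < length xs then pidx xs (ys ! i) else i)"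

definition lperm :: "'a list \<Rightarrow> 'a list \<Rightarrow> bool" where
  "lperm xs ys \<longleftrightarrow> distinct xs \<and> distinct ys \<and> set xs = set ys"

lemma list_sign_pm: "lperm xs ys \<Longrightarrow> list_sign xs ys = of_int (sign (pm xs ys))"
  unfolding list_sign_def lperm_def pm_def pidx_def by simp

lemma list_sign_nonperm: "\<not> lperm xs ys \<Longrightarrow> list_sign xs ys = 0"
  unfolding list_sign_def lperm_def by simp

lemma lperm_length: "lperm xs ys \<Longrightarrow> length xs = length ys"
  unfolding lperm_def by (metis distinct_card)

lemma pm_comp:
  assumes "lperm xs ys" "lperm ys zs"
  shows "pm xs zs = pm xs ys \<circ> pm ys zs"
proof
  fix i
  have l: "length xs = length ys" "length ys = length zs" using assms lperm_length by auto
  show "pm xs zs i = (pm xs ys \<circ> pm ys zs) i"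
  proof (cases "i < length xs")
    case True
    then have zi: "zs ! i \<in> set ys" using assms l unfolding lperm_def by (metis nth_mem)
    then show ?thesis using True l pidx_props[of ys "zs ! i"] assms unfolding pm_def lperm_def by auto
  qed (use l in \<open>auto simp: pm_def\<close>)
qed

lemma pm_permutes:
  assumes "lperm xs ys"
  shows "pm xs ys permutes {..<length xs}"
proof -
  have l: "length xs = length ys" using assms lperm_length by auto
  have d: "distinct xs" "distinct ys" and st: "set xs = set ys" using assms unfolding lperm_def by auto
  have mem: "ys ! i \<in> set xs" if "i < length xs" for i
    using that l st by (metis nth_mem)
  have inj: "inj_on (pm xs ys) {..<length xs}"
  proof (rule inj_onI)
    fix i j assume ij: "i \<in> {..<length xs}" "j \<in> {..<length xs}" "pm xs ys i = pm xs ys j"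
    have i: "i < length xs" and j: "j < length xs" using ij(1,2) by auto
    have "xs ! pidx xs (ys ! i) = ys ! i" by (rule pidx_props(2)[OF d(1) mem[OF i]])
    moreover have "xs ! pidx xs (ys ! j) = ys ! j" by (rule pidx_props(2)[OF d(1) mem[OF j]])
    moreover have "pidx xs (ys ! i) = pidx xs (ys ! j)" using ij(3) i j by (simp add: pm_def)
    ultimately have "ys ! i = ys ! j" by metis
    then show "i = j" using i j l d(2) by (simp add: nth_eq_iff_index_eq)
  qed
  have maps: "pm xs ys ` {..<length xs} \<subseteq> {..<length xs}"
  proof
    fix k assume "k \<in> pm xs ys ` {..<length xs}"
    then obtain i where i: "i < length xs" "k = pm xs ys i" by auto
    then have "k = pidx xs (ys ! i)" by (simp add: pm_def)
    then show "k \<in> {..<length xs}" using pidx_props(1)[OF d(1) mem[OF i(1)]] by simp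
  qed
  have "bij_betw (pm xs ys) {..<length xs} {..<length xs}"
    using inj maps by (simp add: bij_betw_def endo_inj_surj)
  then show ?thesis by (rule bij_imp_permutes) (simp add: pm_def)
qed

lemma lperm_trans: "lperm xs ys \<Longrightarrow> lperm ys zs \<Longrightarrow> lperm xs zs"
  unfolding lperm_def by auto
lemma lperm_sym: "lperm xs ys \<Longrightarrow> lperm ys xs"
  unfolding lperm_def by auto
lemma lperm_refl: "distinct xs \<Longrightarrow> lperm xs xs"
  unfolding lperm_def by auto

lemma ls_trans:
  assumes "lperm xs ys" "lperm ys zs"
  shows "list_sign xs zs = list_sign xs ys * list_sign ys zs"
proof -
  have l: "length xs = length ys" using assms lperm_length by auto
  have p1: "permutation (pm xs ys)" using pm_permutes[OF assms(1)] by (rule permutes_imp_permutation[rotated]) simp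
  have p2: "permutation (pm ys zs)" using pm_permutes[OF assms(2)] by (rule permutes_imp_permutation[rotated]) simp
  show ?thesis
    using assms lperm_trans[OF assms] by (simp add: list_sign_pm pm_comp sign_compose[OF p1 p2])
qed

lemma ls_refl: "distinct xs \<Longrightarrow> list_sign xs xs = 1"
proof -
  assume d: "distinct xs"
  have "pm xs xs = id" using pidx_nth[OF d] by (auto simp: pm_def fun_eq_iff)
  then show ?thesis using d by (simp add: list_sign_pm lperm_refl)
qed

lemma ls_pm1: "lperm xs ys \<Longrightarrow> list_sign xs ys = 1 \<or> list_sign xs ys = -1"
  by (simp add: list_sign_pm sign_def)

lemma ls_sym:
  assumes "lperm xs ys" shows "list_sign ys xs = list_sign xs ys"
proof -
  have "list_sign xs ys * list_sign ys xs = 1"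
    using ls_trans[OF assms lperm_sym[OF assms]] ls_refl[of xs] assms by (simp add: lperm_def)
  then show ?thesis using ls_pm1[OF assms] by auto
qed

lemma ls_cons:
  assumes "lperm xs ys" "a \<notin> set xs"
  shows "list_sign (a # xs) (a # ys) = list_sign xs ys"
proof -
  have l: "length xs = length ys" using assms lperm_length by auto
  have lp: "lperm (a # xs) (a # ys)" using assms unfolding lperm_def by auto
  have eq: "pm (a # xs) (a # ys) = map_permutation {..<length xs} Suc (pm xs ys)"
  proof
    fix i show "pm (a # xs) (a # ys) i = map_permutation {..<length xs} Suc (pm xs ys) i"
    proof (cases i)
      case 0
      have "pidx (a # xs) a = 0" using pidx_nth[of "a # xs" 0] assms unfolding lperm_def by auto
      moreover have "0 \<notin> Suc ` {..<length xs}" by auto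
      ultimately show ?thesis using 0 by (simp add: pm_def map_permutation_def restrict_id_def)
    next
      case (Suc j)
      show ?thesis
      proof (cases "j < length xs")
        case True
        have yj: "ys ! j \<in> set xs" using True l assms unfolding lperm_def by (metis nth_mem)
        have "pidx (a # xs) (ys ! j) = Suc (pidx xs (ys ! j))"
        proof -
          have "(a # xs) ! Suc (pidx xs (ys ! j)) = ys ! j" using pidx_props[of xs "ys ! j"] yj assms by (simp add: lperm_def)
          moreover have "Suc (pidx xs (ys ! j)) < length (a # xs)" using pidx_props[of xs "ys ! j"] yj assms by (simp add: lperm_def)
          ultimately show ?thesis using pidx_nth[of "a # xs" "Suc (pidx xs (ys ! j))"] assms by (simp add: lperm_def)
        qed
        moreover have "map_permutation {..<length xs} Suc (pm xs ys) (Suc j) = Suc (pm xs ys j)"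
          using True by (intro map_permutation_apply) auto
        ultimately show ?thesis using Suc True by (simp add: pm_def)
      next
        case False
        have "Suc j \<notin> Suc ` {..<length xs}" using False by auto
        then show ?thesis using Suc False by (simp add: pm_def map_permutation_def restrict_id_def)
      qed
    qed
  qed
  show ?thesis using lp assms
    by (simp add: list_sign_pm eq sign_map_permutation[OF _ pm_permutes])
qed

lemma ls_swap:
  assumes "distinct (a # b # xs)"
  shows "list_sign (a # b # xs) (b # a # xs) = -1"
proof -
  have lp: "lperm (a # b # xs) (b # a # xs)" using assms unfolding lperm_def by auto
  have eq: "pm (a # b # xs) (b # a # xs) = Transposition.transpose 0 1"
  proof
    fix i show "pm (a # b # xs) (b # a # xs) i = Transposition.transpose 0 1 i"
    proof -
      consider "i = 0" | "i = 1" | "i \<ge> 2" by linarith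
      then show ?thesis
      proof cases
        case 1
        have "pidx (a # b # xs) b = 1" using pidx_nth[OF assms, of 1] by simp
        then show ?thesis using 1 by (simp add: pm_def transpose_def)
      next
        case 2
        have "pidx (a # b # xs) a = 0" using pidx_nth[OF assms, of 0] by simp
        then show ?thesis using 2 by (simp add: pm_def transpose_def)
      next
        case 3
        then obtain k where k: "i = Suc (Suc k)" by (metis add_2_eq_Suc le_Suc_ex)
        show ?thesis
        proof (cases "i < length (a # b # xs)")
          case True
          have "pidx (a # b # xs) ((a # b # xs) ! i) = i" by (rule pidx_nth[OF assms True])
          then have "pidx (a # b # xs) (xs ! k) = i" using k by simp
          then show ?thesis using k True by (simp add: pm_def transpose_def)
        qed (use k in \<open>simp add: pm_def transpose_def\<close>)
      qed
    qed
  qed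
  show ?thesis using lp by (simp add: list_sign_pm eq sign_swap_id)
qed


definition vof :: "'h set list \<Rightarrow> 'h \<Rightarrow> 'h set" where
  "vof V h = (THE v. v \<in> set V \<and> h \<in> v)"

definition pdisj :: "'h set list \<Rightarrow> bool" where
  "pdisj V \<longleftrightarrow> (\<forall>u\<in>set V. \<forall>v\<in>set V. u \<noteq> v \<longrightarrow> u \<inter> v = {})"

lemma vof_eq: "pdisj V \<Longrightarrow> u \<in> set V \<Longrightarrow> h \<in> u \<Longrightarrow> vof V h = u"
  unfolding vof_def pdisj_def by (rule the_equality) auto

lemma vof_in: "pdisj V \<Longrightarrow> h \<in> hedges V \<Longrightarrow> vof V h \<in> set V \<and> h \<in> vof V h"
  unfolding hedges_def using vof_eq by fastforce

lemma wf_unfold: "ograph_wf Op (V, \<iota>, T, c) \<longleftrightarrow>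
     distinct V \<and>
     (\<forall>v\<in>set V. finite v \<and> 2 \<le> card v) \<and>
     pdisj V \<and>
     (\<forall>h\<in>hedges V. \<iota> h \<in> hedges V \<and> \<iota> h \<noteq> h \<and> \<iota> (\<iota> h) = h) \<and>
     (\<forall>h. h \<notin> hedges V \<longrightarrow> \<iota> h = h) \<and>
     T \<subseteq> hedges V \<and> (\<forall>h\<in>hedges V. h \<in> T \<longleftrightarrow> \<iota> h \<notin> T) \<and>
     (\<forall>v\<in>set V. c v \<in> Op v) \<and> (\<forall>u. u \<notin> set V \<longrightarrow> c u = 0)"
  unfolding ograph_wf_def pdisj_def by simp

definition cgr :: "('h set \<Rightarrow> 'h \<Rightarrow> 'h set \<Rightarrow> 'h \<Rightarrow> 'v \<Rightarrow> 'v \<Rightarrow> 'v)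
    \<Rightarrow> ('h, 'v::real_vector) ograph \<Rightarrow> 'h \<Rightarrow> ('h, 'v) ograph" where
  "cgr cmp X t = (case X of (V, \<iota>, T, c) \<Rightarrow>
     (let v = vof V t; w = vof V (\<iota> t); n = (v \<union> w) - {t, \<iota> t};
          rest = filter (\<lambda>u. u \<noteq> v \<and> u \<noteq> w) V in
      (n # rest, (\<lambda>h. if h = t \<or> h = \<iota> t then h else \<iota> h), T - {t},
       (\<lambda>u. if u = n then cmp v t w (\<iota> t) (c v) (c w) else if u \<in> set rest then c u else 0))))"

definition csg :: "('h, 'v) ograph \<Rightarrow> 'h \<Rightarrow> real" where
  "csg X t = (case X of (V, \<iota>, T, c) \<Rightarrow>
     list_sign V (vof V t # vof V (\<iota> t) # filter (\<lambda>u. u \<noteq> vof V t \<and> u \<noteq> vof V (\<iota> t)) V))"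

definition loopt :: "('h, 'v) ograph \<Rightarrow> 'h \<Rightarrow> bool" where
  "loopt X t = (case X of (V, \<iota>, T, c) \<Rightarrow> vof V t = vof V (\<iota> t))"

lemma contract_eq:
  "contract cmp X t = (if loopt X t then 0 else fscale (csg X t) (gen (cgr cmp X t)))"
  by (cases X) (simp add: contract_def loopt_def csg_def cgr_def vof_def Let_def zero_fun_def)

lemma fsupp_contract[simp]: "fsupp (contract cmp X t)"
  by (simp add: contract_eq)

definition Pset :: "('h, 'v) ograph \<Rightarrow> ('h \<times> 'h) set" where
  "Pset X = (case X of (V, \<iota>, T, c) \<Rightarrow>
     {(x, y). x \<in> hedges V \<and> y \<in> hedges V \<and> x \<noteq> y \<and> x \<noteq> \<iota> y})"

definition rgl :: "('h, 'v) ograph \<Rightarrow> 'h \<Rightarrow> 'h \<Rightarrow> ('h, 'v) ograph" where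
  "rgl X x y = snd (reglue X x y)"
definition rs :: "('h, 'v) ograph \<Rightarrow> 'h \<Rightarrow> 'h \<Rightarrow> real" where
  "rs X x y = fst (reglue X x y)"

lemma rgl_simp: "rgl (V, \<iota>, T, c) x y =
      (V, (\<lambda>h. if h = x then y else if h = y then x else if h = \<iota> x then \<iota> y
               else if h = \<iota> y then \<iota> x else \<iota> h),
       (T - {x, \<iota> x, y, \<iota> y}) \<union> {\<iota> x, y}, c)"
  by (simp add: rgl_def reglue_def)
lemma rs_simp: "rs (V, \<iota>, T, c) x y = (-1) ^ card ({x, \<iota> y} - T)"
  by (simp add: rs_def reglue_def)

lemma dH_eq: "dH cmp X = (\<Sum>(x, y)\<in>Pset X. fscale (rs X x y) (contract cmp (rgl X x y) y))"
  by (cases X) (simp add: dH_def Pset_def rs_def rgl_def)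

lemma dE_eq: "dE cmp (V, \<iota>, T, c) = (\<Sum>t\<in>T. contract cmp (V, \<iota>, T, c) t)"
  by (simp add: dE_def)

lemma fsupp_dH[simp]: "fsupp (dH cmp X)"
  by (simp add: dH_eq case_prod_beta)
lemma fsupp_dE[simp]: "fsupp (dE cmp X)"
  by (cases X) (simp add: dE_eq)

lemma finite_hedges: "ograph_wf Op (V, \<iota>, T, c) \<Longrightarrow> finite (hedges V)"
  unfolding wf_unfold hedges_def by auto

lemma finite_Pset: "ograph_wf Op (V, \<iota>, T, c) \<Longrightarrow> finite (Pset (V, \<iota>, T, c))"
  unfolding Pset_def
  by (rule finite_subset[of _ "hedges V \<times> hedges V"]) (auto dest: finite_hedges)


lemma wf_basic:
  assumes "ograph_wf Op (V, \<iota>, T, c)"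
  shows "distinct V" "\<And>v. v \<in> set V \<Longrightarrow> finite v \<and> 2 \<le> card v" "pdisj V"
    "\<And>h. h \<in> hedges V \<Longrightarrow> \<iota> h \<in> hedges V" "\<And>h. h \<in> hedges V \<Longrightarrow> \<iota> h \<noteq> h"
    "\<And>h. \<iota> (\<iota> h) = h"
    "\<And>h. h \<notin> hedges V \<Longrightarrow> \<iota> h = h" "T \<subseteq> hedges V"
    "\<And>h. h \<in> hedges V \<Longrightarrow> h \<in> T \<longleftrightarrow> \<iota> h \<notin> T"
    "\<And>v. v \<in> set V \<Longrightarrow> c v \<in> Op v" "\<And>u. u \<notin> set V \<Longrightarrow> c u = 0"
proof -
  have w: "distinct V \<and>
     (\<forall>v\<in>set V. finite v \<and> 2 \<le> card v) \<and>
     pdisj V \<and>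
     (\<forall>h\<in>hedges V. \<iota> h \<in> hedges V \<and> \<iota> h \<noteq> h \<and> \<iota> (\<iota> h) = h) \<and>
     (\<forall>h. h \<notin> hedges V \<longrightarrow> \<iota> h = h) \<and>
     T \<subseteq> hedges V \<and> (\<forall>h\<in>hedges V. h \<in> T \<longleftrightarrow> \<iota> h \<notin> T) \<and>
     (\<forall>v\<in>set V. c v \<in> Op v) \<and> (\<forall>u. u \<notin> set V \<longrightarrow> c u = 0)"
    using assms unfolding wf_unfold .
  show "distinct V" "\<And>v. v \<in> set V \<Longrightarrow> finite v \<and> 2 \<le> card v" "pdisj V"
    "\<And>h. h \<in> hedges V \<Longrightarrow> \<iota> h \<in> hedges V" "\<And>h. h \<in> hedges V \<Longrightarrow> \<iota> h \<noteq> h"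
    "\<And>h. h \<notin> hedges V \<Longrightarrow> \<iota> h = h" "T \<subseteq> hedges V"
    "\<And>h. h \<in> hedges V \<Longrightarrow> h \<in> T \<longleftrightarrow> \<iota> h \<notin> T"
    "\<And>v. v \<in> set V \<Longrightarrow> c v \<in> Op v" "\<And>u. u \<notin> set V \<Longrightarrow> c u = 0"
    using w by blast+
  show "\<And>h. \<iota> (\<iota> h) = h"
  proof -
    fix h show "\<iota> (\<iota> h) = h"
    proof (cases "h \<in> hedges V")
      case True then show ?thesis using w by blast
    next
      case False then have "\<iota> h = h" using w by blast
      then show ?thesis by simp
    qed
  qed
qed

lemma iota_hedges_iff:
  assumes "ograph_wf Op (V, \<iota>, T, c)"
  shows "\<iota> h \<in> hedges V \<longleftrightarrow> h \<in> hedges V"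
proof
  assume "\<iota> h \<in> hedges V"
  then have "\<iota> (\<iota> h) \<in> hedges V" using wf_basic(4)[OF assms] by blast
  then show "h \<in> hedges V" using wf_basic(6)[OF assms] by simp
qed (use wf_basic(4)[OF assms] in blast)

lemma iota_inj:
  assumes "ograph_wf Op (V, \<iota>, T, c)"
  shows "\<iota> a = \<iota> b \<longleftrightarrow> a = b"
  by (metis wf_basic(6)[OF assms])

lemma tail_not_iota:
  assumes "ograph_wf Op (V, \<iota>, T, c)" "t \<in> T"
  shows "\<iota> t \<notin> T" "t \<in> hedges V" "\<iota> t \<in> hedges V" "\<iota> t \<noteq> t"
proof -
  note b = wf_basic[OF assms(1)]
  show h: "t \<in> hedges V" using b(8) assms(2) by blast
  show "\<iota> t \<notin> T" using b(9)[OF h] assms(2) by blast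
  show "\<iota> t \<in> hedges V" using b(4)[OF h] .
  show "\<iota> t \<noteq> t" using b(5)[OF h] .
qed

lemma cgr_unfold:
  "cgr cmp (V, \<iota>, T, c) t =
     (((vof V t \<union> vof V (\<iota> t)) - {t, \<iota> t}) # filter (\<lambda>u. u \<noteq> vof V t \<and> u \<noteq> vof V (\<iota> t)) V,
      (\<lambda>h. if h = t \<or> h = \<iota> t then h else \<iota> h), T - {t},
      (\<lambda>u. if u = (vof V t \<union> vof V (\<iota> t)) - {t, \<iota> t}
            then cmp (vof V t) t (vof V (\<iota> t)) (\<iota> t) (c (vof V t)) (c (vof V (\<iota> t)))
            else if u \<in> set (filter (\<lambda>u. u \<noteq> vof V t \<and> u \<noteq> vof V (\<iota> t)) V) then c u else 0))"
  by (simp add: cgr_def Let_def)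

lemma co_cmp_in:
  assumes "cyclic_operad Op cmp ren un"
  shows "\<And>S T x y a b. finite S \<Longrightarrow> finite T \<Longrightarrow> S \<inter> T = {} \<Longrightarrow> x \<in> S \<Longrightarrow> y \<in> T \<Longrightarrow> a \<in> Op S \<Longrightarrow> b \<in> Op T
        \<Longrightarrow> cmp S x T y a b \<in> Op ((S - {x}) \<union> (T - {y}))"
proof -
  have "\<forall>S T x y a b. finite S \<and> finite T \<and> S \<inter> T = {} \<and> x \<in> S \<and> y \<in> T \<and> a \<in> Op S \<and> b \<in> Op T
        \<longrightarrow> cmp S x T y a b \<in> Op ((S - {x}) \<union> (T - {y}))"
    using assms unfolding cyclic_operad_def by (elim conjE) assumption
  then show "\<And>S T x y a b. finite S \<Longrightarrow> finite T \<Longrightarrow> S \<inter> T = {} \<Longrightarrow> x \<in> S \<Longrightarrow> y \<in> T \<Longrightarrow> a \<in> Op S \<Longrightarrow> b \<in> Op T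
        \<Longrightarrow> cmp S x T y a b \<in> Op ((S - {x}) \<union> (T - {y}))" by blast
qed

lemma co_comm:
  assumes "cyclic_operad Op cmp ren un"
  shows "\<And>S T x y a b. finite S \<Longrightarrow> finite T \<Longrightarrow> S \<inter> T = {} \<Longrightarrow> x \<in> S \<Longrightarrow> y \<in> T \<Longrightarrow> a \<in> Op S \<Longrightarrow> b \<in> Op T
        \<Longrightarrow> cmp S x T y a b = cmp T y S x b a"
proof -
  have "\<forall>S T x y a b. finite S \<and> finite T \<and> S \<inter> T = {} \<and> x \<in> S \<and> y \<in> T \<and> a \<in> Op S \<and> b \<in> Op T
        \<longrightarrow> cmp S x T y a b = cmp T y S x b a"
    using assms unfolding cyclic_operad_def by (elim conjE) assumption
  then show "\<And>S T x y a b. finite S \<Longrightarrow> finite T \<Longrightarrow> S \<inter> T = {} \<Longrightarrow> x \<in> S \<Longrightarrow> y \<in> T \<Longrightarrow> a \<in> Op S \<Longrightarrow> b \<in> Op T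
        \<Longrightarrow> cmp S x T y a b = cmp T y S x b a" by blast
qed

lemma co_assoc:
  assumes "cyclic_operad Op cmp ren un"
  shows "\<And>S T U x y z w a b c. finite S \<Longrightarrow> finite T \<Longrightarrow> finite U \<Longrightarrow>
        S \<inter> T = {} \<Longrightarrow> S \<inter> U = {} \<Longrightarrow> T \<inter> U = {} \<Longrightarrow>
        x \<in> S \<Longrightarrow> y \<in> T \<Longrightarrow> z \<in> T \<Longrightarrow> y \<noteq> z \<Longrightarrow> w \<in> U \<Longrightarrow> a \<in> Op S \<Longrightarrow> b \<in> Op T \<Longrightarrow> c \<in> Op U
        \<Longrightarrow> cmp ((S - {x}) \<union> (T - {y})) z U w (cmp S x T y a b) c
            = cmp S x ((T - {z}) \<union> (U - {w})) y a (cmp T z U w b c)"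
proof -
  have "\<forall>S T U x y z w a b c. finite S \<and> finite T \<and> finite U \<and>
        S \<inter> T = {} \<and> S \<inter> U = {} \<and> T \<inter> U = {} \<and>
        x \<in> S \<and> y \<in> T \<and> z \<in> T \<and> y \<noteq> z \<and> w \<in> U \<and> a \<in> Op S \<and> b \<in> Op T \<and> c \<in> Op U
        \<longrightarrow> cmp ((S - {x}) \<union> (T - {y})) z U w (cmp S x T y a b) c
            = cmp S x ((T - {z}) \<union> (U - {w})) y a (cmp T z U w b c)"
    using assms unfolding cyclic_operad_def by (elim conjE) assumption
  then show "\<And>S T U x y z w a b c. finite S \<Longrightarrow> finite T \<Longrightarrow> finite U \<Longrightarrow>
        S \<inter> T = {} \<Longrightarrow> S \<inter> U = {} \<Longrightarrow> T \<inter> U = {} \<Longrightarrow>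
        x \<in> S \<Longrightarrow> y \<in> T \<Longrightarrow> z \<in> T \<Longrightarrow> y \<noteq> z \<Longrightarrow> w \<in> U \<Longrightarrow> a \<in> Op S \<Longrightarrow> b \<in> Op T \<Longrightarrow> c \<in> Op U
        \<Longrightarrow> cmp ((S - {x}) \<union> (T - {y})) z U w (cmp S x T y a b) c
            = cmp S x ((T - {z}) \<union> (U - {w})) y a (cmp T z U w b c)" by blast
qed

context
  fixes Op :: "'h set \<Rightarrow> 'v::real_vector set" and cmp ren un V \<iota> T c t
  assumes co: "cyclic_operad Op cmp ren un"
    and wf: "ograph_wf Op (V, \<iota>, T, c)"
    and tT0: "t \<in> T"
    and nl: "\<not> loopt (V, \<iota>, T, c) t"
begin

lemma tT: "t \<in> hedges V" using tail_not_iota(2)[OF wf tT0] .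

definition "v0 = vof V t"
definition "w0 = vof V (\<iota> t)"
definition "n0 = (v0 \<union> w0) - {t, \<iota> t}"
definition "r0 = filter (\<lambda>u. u \<noteq> v0 \<and> u \<noteq> w0) V"

lemma basic:
  "v0 \<in> set V" "t \<in> v0" "w0 \<in> set V" "\<iota> t \<in> w0" "v0 \<noteq> w0" "v0 \<inter> w0 = {}"
  "\<iota> t \<in> hedges V" "\<iota> t \<noteq> t"
proof -
  note b = wf_basic[OF wf]
  show "v0 \<in> set V" "t \<in> v0" using vof_in[OF b(3) tT] by (auto simp: v0_def)
  show i: "\<iota> t \<in> hedges V" using b(4) tT by auto
  show "w0 \<in> set V" "\<iota> t \<in> w0" using vof_in[OF b(3) i] by (auto simp: w0_def)
  show "v0 \<noteq> w0" using nl by (simp add: loopt_def v0_def w0_def)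
  then show "v0 \<inter> w0 = {}" using b(3) \<open>v0 \<in> set V\<close> \<open>w0 \<in> set V\<close> unfolding pdisj_def by auto
  show "\<iota> t \<noteq> t" using b(5) tT by auto
qed

lemma n0_eq: "n0 = (v0 - {t}) \<union> (w0 - {\<iota> t})"
  using basic unfolding n0_def by auto

lemma fin_vw: "finite v0" "finite w0" "card v0 \<ge> 2" "card w0 \<ge> 2"
  using wf_basic(2)[OF wf] basic by auto

lemma card_n0: "card n0 \<ge> 2"
proof -
  have "card n0 = card (v0 - {t}) + card (w0 - {\<iota> t})"
    unfolding n0_eq by (rule card_Un_disjoint) (use fin_vw basic in auto)
  then show ?thesis using fin_vw basic by (simp add: card_Diff_singleton)
qed

lemma r0_mem: "u \<in> set r0 \<longleftrightarrow> u \<in> set V \<and> u \<noteq> v0 \<and> u \<noteq> w0"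
  unfolding r0_def by simp

lemma r0_disj: "u \<in> set r0 \<Longrightarrow> u \<inter> v0 = {} \<and> u \<inter> w0 = {} \<and> u \<in> set V"
proof -
  assume "u \<in> set r0"
  then have u: "u \<in> set V" "u \<noteq> v0" "u \<noteq> w0" unfolding r0_mem by auto
  have p: "pdisj V" by (rule wf_basic(3)[OF wf])
  show ?thesis using p u basic(1,3) unfolding pdisj_def by blast
qed

lemma pd_cgr: "pdisj (n0 # r0)"
proof -
  have p: "pdisj V" by (rule wf_basic(3)[OF wf])
  have a: "n0 \<inter> u = {}" if "u \<in> set r0" for u
    using r0_disj[OF that] unfolding n0_def by blast
  have b: "u \<inter> u' = {}" if "u \<in> set r0" "u' \<in> set r0" "u \<noteq> u'" for u u'
    using p r0_disj[OF that(1)] r0_disj[OF that(2)] that(3) unfolding pdisj_def by blast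
  show ?thesis unfolding pdisj_def
  proof (intro ballI impI)
    fix u u' assume "u \<in> set (n0 # r0)" "u' \<in> set (n0 # r0)" "u \<noteq> u'"
    then consider "u = n0" "u' \<in> set r0" | "u' = n0" "u \<in> set r0" | "u \<in> set r0" "u' \<in> set r0"
      by auto
    then show "u \<inter> u' = {}"
    proof cases
      case 1 then show ?thesis using a by blast
    next
      case 2 then show ?thesis using a by blast
    next
      case 3 then show ?thesis using b \<open>u \<noteq> u'\<close> by blast
    qed
  qed
qed

lemma n0_notin: "n0 \<notin> set V"
proof
  assume n: "n0 \<in> set V"
  have "card n0 \<ge> 2" by (rule card_n0)
  then obtain h where h: "h \<in> n0" by fastforce
  then have "h \<in> v0 \<or> h \<in> w0" unfolding n0_def by auto
  then have "n0 = v0 \<or> n0 = w0" using n basic wf_basic(3)[OF wf] h unfolding pdisj_def by blast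
  then show False using basic unfolding n0_def by auto
qed

lemma hedges_cgr: "hedges (n0 # r0) = hedges V - {t, \<iota> t}"
proof -
  have "set V = set r0 \<union> {v0, w0}" using basic r0_mem by auto
  then have "hedges V = v0 \<union> w0 \<union> \<Union>(set r0)"
    unfolding hedges_def by auto
  moreover have "t \<notin> \<Union>(set r0)" "\<iota> t \<notin> \<Union>(set r0)" using r0_disj basic by blast+
  ultimately show ?thesis unfolding hedges_def n0_def by auto
qed

lemma vof_cgr:
  assumes "h \<in> hedges V" "h \<noteq> t" "h \<noteq> \<iota> t"
  shows "vof (n0 # r0) h = (if vof V h = v0 \<or> vof V h = w0 then n0 else vof V h)"
proof -
  have pd: "pdisj (n0 # r0)" by (rule pd_cgr)
  obtain u where u: "u \<in> set V" "h \<in> u" using assms(1) unfolding hedges_def by auto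
  have vu: "vof V h = u" using vof_eq[OF wf_basic(3)[OF wf] u] .
  show ?thesis
  proof (cases "u = v0 \<or> u = w0")
    case True
    then have "h \<in> n0" using u assms unfolding n0_def by auto
    then show ?thesis using vof_eq[OF pd, of n0 h] True vu by simp
  next
    case False
    then have "u \<in> set r0" using u unfolding r0_mem by auto
    then show ?thesis using vof_eq[OF pd, of u h] False vu u by simp
  qed
qed

lemma hedges_cgr': "hedges (fst (cgr cmp (V, \<iota>, T, c) t)) = hedges V - {t, \<iota> t}"
  using hedges_cgr by (simp add: cgr_unfold n0_def r0_def v0_def w0_def)

lemma vof_cgr':
  assumes "h \<in> hedges V" "h \<noteq> t" "h \<noteq> \<iota> t"
  shows "vof (fst (cgr cmp (V, \<iota>, T, c) t)) h = (if vof V h = vof V t \<or> vof V h = vof V (\<iota> t) then (vof V t \<union> vof V (\<iota> t)) - {t, \<iota> t} else vof V h)"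
  using vof_cgr[OF assms] by (simp add: cgr_unfold n0_def r0_def v0_def w0_def)

lemma n0_notin': "(vof V t \<union> vof V (\<iota> t)) - {t, \<iota> t} \<notin> set V"
  using n0_notin by (simp add: n0_def v0_def w0_def)

lemma card_n0': "2 \<le> card ((vof V t \<union> vof V (\<iota> t)) - {t, \<iota> t})"
  using card_n0 by (simp add: n0_def v0_def w0_def)

lemma iota_cgr_mem:
  assumes "h \<in> hedges V - {t, \<iota> t}"
  shows "\<iota> h \<in> hedges V - {t, \<iota> t}"
proof -
  note b = wf_basic[OF wf]
  have "\<iota> h \<in> hedges V" using b(4) assms by blast
  moreover have "\<iota> h \<noteq> t"
  proof
    assume "\<iota> h = t" then have "\<iota> (\<iota> h) = \<iota> t" by simp
    then show False using assms b(6) by simp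
  qed
  moreover have "\<iota> h \<noteq> \<iota> t" using assms b(6) by (metis DiffE insertCI)
  ultimately show ?thesis by blast
qed

lemma wf_cgr: "ograph_wf Op (cgr cmp (V, \<iota>, T, c) t)"
proof -
  note b = wf_basic[OF wf]
  define i' where "i' = (\<lambda>h. if h = t \<or> h = \<iota> t then h else \<iota> h)"
  define c' where "c' = (\<lambda>u. if u = n0 then cmp v0 t w0 (\<iota> t) (c v0) (c w0) else if u \<in> set r0 then c u else 0)"
  have cg: "cgr cmp (V, \<iota>, T, c) t = (n0 # r0, i', T - {t}, c')"
    unfolding c'_def i'_def n0_def r0_def v0_def w0_def cgr_unfold by (rule refl)
  have pd: "pdisj (n0 # r0)" by (rule pd_cgr)
  have dist: "distinct (n0 # r0)"
  proof -
    have "n0 \<notin> set r0" using n0_notin r0_mem by blast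
    moreover have "distinct r0" unfolding r0_def using b(1) by simp
    ultimately show ?thesis by simp
  qed
  have fin: "\<forall>u\<in>set (n0 # r0). finite u \<and> 2 \<le> card u"
  proof
    fix u assume "u \<in> set (n0 # r0)"
    then consider "u = n0" | "u \<in> set r0" by auto
    then show "finite u \<and> 2 \<le> card u"
    proof cases
      case 1 then show ?thesis using card_n0 fin_vw unfolding n0_def by simp
    next
      case 2 then show ?thesis using b(2) r0_disj by blast
    qed
  qed
  have H: "hedges (n0 # r0) = hedges V - {t, \<iota> t}" by (rule hedges_cgr)
  have i'h: "i' h = \<iota> h" if "h \<in> hedges V - {t, \<iota> t}" for h
    using that by (auto simp: i'_def)
  have iv: "\<forall>h\<in>hedges (n0 # r0). i' h \<in> hedges (n0 # r0) \<and> i' h \<noteq> h \<and> i' (i' h) = h"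
  proof
    fix h assume "h \<in> hedges (n0 # r0)"
    then have h: "h \<in> hedges V - {t, \<iota> t}" using H by simp
    have ih: "\<iota> h \<in> hedges V - {t, \<iota> t}" by (rule iota_cgr_mem[OF h])
    show "i' h \<in> hedges (n0 # r0) \<and> i' h \<noteq> h \<and> i' (i' h) = h"
      unfolding H i'h[OF h] i'h[OF ih] using ih b(5) b(6) h by auto
  qed
  have off: "\<forall>h. h \<notin> hedges (n0 # r0) \<longrightarrow> i' h = h"
  proof (intro allI impI)
    fix h assume h: "h \<notin> hedges (n0 # r0)"
    show "i' h = h"
    proof (cases "h = t \<or> h = \<iota> t")
      case True then show ?thesis by (simp add: i'_def)
    next
      case False then have "h \<notin> hedges V" using h H by blast
      then show ?thesis using b(7) False by (simp add: i'_def)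
    qed
  qed
  have Tsub: "T - {t} \<subseteq> hedges (n0 # r0)" unfolding H
  proof
    fix h assume h: "h \<in> T - {t}"
    have "h \<in> hedges V" using h b(8) by blast
    moreover have "h \<noteq> \<iota> t" using h tail_not_iota(1)[OF wf tT0] by blast
    ultimately show "h \<in> hedges V - {t, \<iota> t}" using h by blast
  qed
  have Tiff: "\<forall>h\<in>hedges (n0 # r0). h \<in> T - {t} \<longleftrightarrow> i' h \<notin> T - {t}"
  proof
    fix h assume "h \<in> hedges (n0 # r0)"
    then have h: "h \<in> hedges V - {t, \<iota> t}" using H by simp
    have ih: "\<iota> h \<in> hedges V - {t, \<iota> t}" by (rule iota_cgr_mem[OF h])
    have "h \<in> T \<longleftrightarrow> \<iota> h \<notin> T" using b(9) h by blast
    then show "h \<in> T - {t} \<longleftrightarrow> i' h \<notin> T - {t}" unfolding i'h[OF h] using h ih by blast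
  qed
  have cn: "cmp v0 t w0 (\<iota> t) (c v0) (c w0) \<in> Op n0"
    unfolding n0_eq by (rule co_cmp_in[OF co]) (use basic fin_vw b(10) in auto)
  have col: "\<forall>u\<in>set (n0 # r0). c' u \<in> Op u"
  proof
    fix u assume "u \<in> set (n0 # r0)"
    then consider "u = n0" | "u \<in> set r0" "u \<noteq> n0" using n0_notin r0_disj by auto
    then show "c' u \<in> Op u"
    proof cases
      case 1 then show ?thesis using cn by (simp add: c'_def)
    next
      case 2 then show ?thesis using b(10) r0_disj by (simp add: c'_def)
    qed
  qed
  have col0: "\<forall>u. u \<notin> set (n0 # r0) \<longrightarrow> c' u = 0"
    by (auto simp: c'_def)
  show ?thesis unfolding cg wf_unfold
    by (intro conjI dist fin pd iv off Tsub Tiff col col0)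
qed

end


definition riota :: "('h \<Rightarrow> 'h) \<Rightarrow> 'h \<Rightarrow> 'h \<Rightarrow> 'h \<Rightarrow> 'h" where
  "riota \<iota> x y = (\<lambda>h. if h = x then y else if h = y then x else if h = \<iota> x then \<iota> y
               else if h = \<iota> y then \<iota> x else \<iota> h)"

lemma rgl_simp2: "rgl (V, \<iota>, T, c) x y = (V, riota \<iota> x y, (T - {x, \<iota> x, y, \<iota> y}) \<union> {\<iota> x, y}, c)"
  by (simp add: rgl_simp riota_def)

lemma Pset_simp: "Pset (V, \<iota>, T, c) = {(x, y). x \<in> hedges V \<and> y \<in> hedges V \<and> x \<noteq> y \<and> x \<noteq> \<iota> y}"
  by (simp add: Pset_def)

context
  fixes Op :: "'h set \<Rightarrow> 'v::real_vector set" and V \<iota> T c x y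
  assumes wf: "ograph_wf Op (V, \<iota>, T, c)"
    and xH: "x \<in> hedges V" and yH: "y \<in> hedges V" and xy: "x \<noteq> y" and xiy: "x \<noteq> \<iota> y"
begin

lemma four_distinct: "x \<noteq> \<iota> x" "y \<noteq> \<iota> y" "\<iota> x \<noteq> y" "\<iota> x \<noteq> \<iota> y" "\<iota> x \<in> hedges V" "\<iota> y \<in> hedges V"
proof -
  note b = wf_basic[OF wf]
  show "x \<noteq> \<iota> x" using b(5)[OF xH] by auto
  show "y \<noteq> \<iota> y" using b(5)[OF yH] by auto
  show "\<iota> x \<noteq> y"
  proof
    assume "\<iota> x = y" then have "\<iota> (\<iota> x) = \<iota> y" by simp
    then show False using xiy b(6) by simp
  qed
  show "\<iota> x \<noteq> \<iota> y"
  proof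
    assume "\<iota> x = \<iota> y" then have "\<iota> (\<iota> x) = \<iota> (\<iota> y)" by simp
    then show False using xy b(6) by simp
  qed
  show "\<iota> x \<in> hedges V" "\<iota> y \<in> hedges V" using b(4) xH yH by auto
qed

lemma riota_other: "h \<notin> {x, y, \<iota> x, \<iota> y} \<Longrightarrow> riota \<iota> x y h = \<iota> h"
  by (auto simp: riota_def)

lemma riota_vals: "riota \<iota> x y x = y" "riota \<iota> x y y = x" "riota \<iota> x y (\<iota> x) = \<iota> y" "riota \<iota> x y (\<iota> y) = \<iota> x"
  using four_distinct xy xiy by (auto simp: riota_def)

lemma iota_eq_iff: "\<iota> h = k \<longleftrightarrow> h = \<iota> k"
  using wf_basic(6)[OF wf] by auto

lemma iota_other: "h \<notin> {x, y, \<iota> x, \<iota> y} \<Longrightarrow> \<iota> h \<notin> {x, y, \<iota> x, \<iota> y}"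
  unfolding insert_iff iota_eq_iff using wf_basic(6)[OF wf] by auto

lemma wf_rgl: "ograph_wf Op (rgl (V, \<iota>, T, c) x y)"
proof -
  note b = wf_basic[OF wf]
  note fd = four_distinct
  let ?j = "riota \<iota> x y"
  let ?T = "(T - {x, \<iota> x, y, \<iota> y}) \<union> {\<iota> x, y}"
  have iv: "\<forall>h\<in>hedges V. ?j h \<in> hedges V \<and> ?j h \<noteq> h \<and> ?j (?j h) = h"
  proof
    fix h assume h: "h \<in> hedges V"
    show "?j h \<in> hedges V \<and> ?j h \<noteq> h \<and> ?j (?j h) = h"
    proof (cases "h \<in> {x, y, \<iota> x, \<iota> y}")
      case True
      then show ?thesis using riota_vals fd xy xiy xH yH by auto
    next
      case False
      have o: "\<iota> h \<notin> {x, y, \<iota> x, \<iota> y}" by (rule iota_other[OF False])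
      show ?thesis unfolding riota_other[OF False] riota_other[OF o] using b(4,5,6) h by auto
    qed
  qed
  have off: "\<forall>h. h \<notin> hedges V \<longrightarrow> ?j h = h"
  proof (intro allI impI)
    fix h assume h: "h \<notin> hedges V"
    then have "h \<notin> {x, y, \<iota> x, \<iota> y}" using xH yH fd by auto
    then show "?j h = h" using riota_other b(7)[OF h] by simp
  qed
  have Tsub: "?T \<subseteq> hedges V" using b(8) fd yH by auto
  have Tiff: "\<forall>h\<in>hedges V. h \<in> ?T \<longleftrightarrow> ?j h \<notin> ?T"
  proof
    fix h assume h: "h \<in> hedges V"
    show "h \<in> ?T \<longleftrightarrow> ?j h \<notin> ?T"
    proof (cases "h \<in> {x, y, \<iota> x, \<iota> y}")
      case True
      then show ?thesis using riota_vals fd xy xiy by auto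
    next
      case False
      have o: "\<iota> h \<notin> {x, y, \<iota> x, \<iota> y}" by (rule iota_other[OF False])
      have "h \<in> T \<longleftrightarrow> \<iota> h \<notin> T" using b(9)[OF h] .
      then show ?thesis unfolding riota_other[OF False] using False o by blast
    qed
  qed
  show ?thesis unfolding rgl_simp2 wf_unfold
    using b(1,2,3,10,11) iv off Tsub Tiff by (intro conjI) blast+
qed

end


context
  fixes Op :: "'h set \<Rightarrow> 'v::real_vector set" and cmp :: "'h set \<Rightarrow> 'h \<Rightarrow> 'h set \<Rightarrow> 'h \<Rightarrow> 'v \<Rightarrow> 'v \<Rightarrow> 'v"
    and V \<iota> T c x y t
  assumes wf: "ograph_wf Op (V, \<iota>, T, c)" and tT: "t \<in> T"
    and xH: "x \<in> hedges V - {t, \<iota> t}" and yH: "y \<in> hedges V - {t, \<iota> t}" and xy: "x \<noteq> y" and xiy: "x \<noteq> \<iota> y"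
begin

lemma t_other: "t \<notin> {x, y, \<iota> x, \<iota> y}" "\<iota> t \<notin> {x, y, \<iota> x, \<iota> y}"
proof -
  have e: "\<iota> a = b \<longleftrightarrow> a = \<iota> b" for a b using wf_basic(6)[OF wf] by auto
  show "t \<notin> {x, y, \<iota> x, \<iota> y}" using xH yH wf_basic(6)[OF wf] unfolding insert_iff e by auto
  show "\<iota> t \<notin> {x, y, \<iota> x, \<iota> y}" using xH yH wf_basic(6)[OF wf] unfolding insert_iff e by auto
qed

lemma rc_tT: "t \<in> (T - {x, \<iota> x, y, \<iota> y}) \<union> {\<iota> x, y}"
  using tT t_other by auto

lemma rc_riota_t: "riota \<iota> x y t = \<iota> t"
  using t_other(1) unfolding riota_def by simp

lemma rc_cgr: "rgl (cgr cmp (V, \<iota>, T, c) t) x y = cgr cmp (rgl (V, \<iota>, T, c) x y) t"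
proof -
  let ?i' = "\<lambda>h. if h = t \<or> h = \<iota> t then h else \<iota> h"
  have ix: "?i' x = \<iota> x" "?i' y = \<iota> y" using xH yH by auto
  have iot: "riota \<iota> x y (\<iota> t) = t" using t_other(2) wf_basic(6)[OF wf] unfolding riota_def by simp
  have io: "riota ?i' x y = (\<lambda>h. if h = t \<or> h = riota \<iota> x y t then h else riota \<iota> x y h)"
  proof
    fix h show "riota ?i' x y h = (if h = t \<or> h = riota \<iota> x y t then h else riota \<iota> x y h)"
      unfolding rc_riota_t using t_other ix iot by (auto simp: riota_def)
  qed
  have T: "(T - {t} - {x, ?i' x, y, ?i' y}) \<union> {?i' x, y} = ((T - {x, \<iota> x, y, \<iota> y}) \<union> {\<iota> x, y}) - {t}"
    unfolding ix using t_other by auto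
  show ?thesis
    unfolding rgl_simp2 cgr_unfold rc_riota_t io T by simp
qed

lemma rc_rs: "rs (cgr cmp (V, \<iota>, T, c) t) x y = rs (V, \<iota>, T, c) x y"
proof -
  have "{x, (if y = t \<or> y = \<iota> t then y else \<iota> y)} - (T - {t}) = {x, \<iota> y} - T"
    using xH yH t_other by auto
  then show ?thesis by (simp add: cgr_unfold rs_simp)
qed

lemma rc_loopt: "loopt (rgl (V, \<iota>, T, c) x y) t = loopt (V, \<iota>, T, c) t"
  by (simp add: rgl_simp2 loopt_def rc_riota_t)

lemma rc_csg: "csg (rgl (V, \<iota>, T, c) x y) t = csg (V, \<iota>, T, c) t"
  by (simp add: rgl_simp2 csg_def rc_riota_t)

end

lemma Pset_cgr:
  assumes co: "cyclic_operad Op cmp ren un" and wf: "ograph_wf Op (V, \<iota>, T, c)" and tT: "t \<in> T" and nl: "\<not> loopt (V, \<iota>, T, c) t"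
  shows "Pset (cgr cmp (V, \<iota>, T, c) t) = {(x, y). x \<in> hedges V - {t, \<iota> t} \<and> y \<in> hedges V - {t, \<iota> t} \<and> x \<noteq> y \<and> x \<noteq> \<iota> y}"
proof -
  have H: "hedges (fst (cgr cmp (V, \<iota>, T, c) t)) = hedges V - {t, \<iota> t}"
    by (rule hedges_cgr'[OF co wf tT nl])
  show ?thesis using H by (auto simp: cgr_unfold Pset_simp)
qed


definition DD :: "('h set \<Rightarrow> 'h \<Rightarrow> 'h set \<Rightarrow> 'h \<Rightarrow> 'v \<Rightarrow> 'v \<Rightarrow> 'v)
    \<Rightarrow> ('h, 'v::real_vector) ograph \<Rightarrow> 'h \<Rightarrow> 'h \<Rightarrow> ('h, 'v) ograph \<Rightarrow> real" where
  "DD cmp W t1 t2 = lin_ext (\<lambda>g. contract cmp g t2) (contract cmp W t1)"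

lemma DD_eq: "DD cmp W t1 t2 = (if loopt W t1 then 0 else fscale (csg W t1) (contract cmp (cgr cmp W t1) t2))"
  by (simp add: DD_def contract_eq lin_ext_fscale)

lemma fsupp_DD[simp]: "fsupp (DD cmp W t1 t2)"
  by (simp add: DD_eq)

definition Pt :: "'h set list \<Rightarrow> ('h \<Rightarrow> 'h) \<Rightarrow> 'h \<Rightarrow> ('h \<times> 'h) set" where
  "Pt V \<iota> t = {(x, y). x \<in> hedges V - {t, \<iota> t} \<and> y \<in> hedges V - {t, \<iota> t} \<and> x \<noteq> y \<and> x \<noteq> \<iota> y}"

lemma cgr_tuple: "\<exists>V' \<iota>' c'. cgr cmp (V, \<iota>, T, c) t = (V', \<iota>', T - {t}, c')"
  by (simp add: cgr_unfold)

lemma LH: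
  assumes co: "cyclic_operad Op cmp ren un" and wf: "ograph_wf Op (V, \<iota>, T, c)" and tT: "t \<in> T"
  shows "lin_ext (dH cmp) (contract cmp (V, \<iota>, T, c) t)
       = (\<Sum>(x, y)\<in>Pt V \<iota> t. fscale (rs (V, \<iota>, T, c) x y) (DD cmp (rgl (V, \<iota>, T, c) x y) t y))"
proof (cases "loopt (V, \<iota>, T, c) t")
  case True
  have "DD cmp (rgl (V, \<iota>, T, c) x y) t y = 0" if "(x, y) \<in> Pt V \<iota> t" for x y
    using that True rc_loopt[OF wf tT] by (simp add: DD_eq Pt_def)
  then show ?thesis using True by (simp add: contract_eq case_prod_beta)
next
  case False
  let ?W = "(V, \<iota>, T, c)"
  have "lin_ext (dH cmp) (contract cmp ?W t) = fscale (csg ?W t) (dH cmp (cgr cmp ?W t))"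
    using False by (simp add: contract_eq lin_ext_fscale)
  also have "\<dots> = fscale (csg ?W t) (\<Sum>(x, y)\<in>Pt V \<iota> t. fscale (rs (cgr cmp ?W t) x y) (contract cmp (rgl (cgr cmp ?W t) x y) y))"
    unfolding dH_eq Pset_cgr[OF co wf tT False] Pt_def by simp
  also have "\<dots> = (\<Sum>(x, y)\<in>Pt V \<iota> t. fscale (rs ?W x y) (DD cmp (rgl ?W x y) t y))"
    unfolding fscale_sum
  proof (rule sum.cong[OF refl], clarify)
    fix x y assume xy: "(x, y) \<in> Pt V \<iota> t"
    then have a: "x \<in> hedges V - {t, \<iota> t}" "y \<in> hedges V - {t, \<iota> t}" "x \<noteq> y" "x \<noteq> \<iota> y"
      by (auto simp: Pt_def)
    show "fscale (csg ?W t) (fscale (rs (cgr cmp ?W t) x y) (contract cmp (rgl (cgr cmp ?W t) x y) y))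
        = fscale (rs ?W x y) (DD cmp (rgl ?W x y) t y)"
      unfolding DD_eq rc_loopt[OF wf tT a] rc_csg[OF wf tT a] rc_rs[OF wf tT a] rc_cgr[OF wf tT a]
      using False by (simp add: mult.commute)
  qed
  finally show ?thesis .
qed

lemma LE:
  shows "lin_ext (dE cmp) (contract cmp (V, \<iota>, T, c) t) = (\<Sum>t'\<in>T - {t}. DD cmp (V, \<iota>, T, c) t t')"
proof (cases "loopt (V, \<iota>, T, c) t")
  case True
  then show ?thesis by (simp add: contract_eq DD_eq)
next
  case False
  obtain V' \<iota>' c' where cg: "cgr cmp (V, \<iota>, T, c) t = (V', \<iota>', T - {t}, c')"
    using cgr_tuple[of cmp V \<iota> T c t] by blast
  show ?thesis
    using False by (simp add: contract_eq lin_ext_fscale DD_eq cg dE_eq fscale_sum)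
qed


lemma og_rel_intro:
  assumes "ograph_wf Op (V1, \<iota>, T1, c)" "ograph_wf Op (V2, \<iota>, T2, c)" "set V2 = set V1"
    and "a + b * (list_sign V1 V2 * (-1) ^ card (T1 - T2)) = 0"
  shows "fscale a (gen (V1, \<iota>, T1, c)) + fscale b (gen (V2, \<iota>, T2, c)) \<in> fspan (og_rel Op ren)"
proof -
  let ?L = "list_sign V1 V2 * (-1) ^ card (T1 - T2)"
  have r: "gen (V2, \<iota>, T2, c) - fscale ?L (gen (V1, \<iota>, T1, c)) \<in> og_rel Op ren"
    unfolding og_rel_def using assms(1-3) by blast
  have "fscale a (gen (V1, \<iota>, T1, c)) + fscale b (gen (V2, \<iota>, T2, c))
      = fscale b (gen (V2, \<iota>, T2, c) - fscale ?L (gen (V1, \<iota>, T1, c)))"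
  proof -
    have "a = - b * ?L" using assms(4) by linarith
    then show ?thesis by (simp add: fun_eq_iff algebra_simps)
  qed
  then show ?thesis using fspan_fscale[OF fspan_base[OF r]] by simp
qed

lemma ls_step:
  assumes "distinct V" "p \<in> set V" "q \<in> set V" "p \<noteq> q" "n \<notin> set V" "lperm (filter (\<lambda>u. u \<noteq> p \<and> u \<noteq> q) V) L"
  shows "list_sign V (p # q # filter (\<lambda>u. u \<noteq> p \<and> u \<noteq> q) V) * list_sign (n # filter (\<lambda>u. u \<noteq> p \<and> u \<noteq> q) V) (n # L)
       = list_sign V (p # q # L)"
proof -
  let ?r = "filter (\<lambda>u. u \<noteq> p \<and> u \<noteq> q) V"
  have sr: "set ?r = set V - {p, q}" by auto
  have l1: "lperm V (p # q # ?r)" unfolding lperm_def using assms(1-4) by auto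
  have nr: "n \<notin> set ?r" using assms(5) by auto
  have l2: "lperm (p # q # ?r) (p # q # L)"
    using assms(6) assms(4) unfolding lperm_def by auto
  have "list_sign (n # ?r) (n # L) = list_sign ?r L" by (rule ls_cons[OF assms(6) nr])
  also have "\<dots> = list_sign (q # ?r) (q # L)"
    by (rule ls_cons[symmetric]) (use assms(6) in auto)
  also have "\<dots> = list_sign (p # q # ?r) (p # q # L)"
    by (rule ls_cons[symmetric]) (use assms(4,6) l2 in \<open>auto simp: lperm_def\<close>)
  finally have "list_sign (n # ?r) (n # L) = list_sign (p # q # ?r) (p # q # L)" .
  then show ?thesis using ls_trans[OF l1 l2] by simp
qed

lemma ls_rot:
  assumes "distinct (n # a # b # R)"
  shows "list_sign (n # a # b # R) (a # b # n # R) = 1"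
proof -
  have l1: "lperm (n # a # b # R) (a # n # b # R)" using assms unfolding lperm_def by auto
  have l2: "lperm (a # n # b # R) (a # b # n # R)" using assms unfolding lperm_def by auto
  have s1: "list_sign (n # a # b # R) (a # n # b # R) = -1" by (rule ls_swap[OF assms])
  have "list_sign (a # n # b # R) (a # b # n # R) = list_sign (n # b # R) (b # n # R)"
    by (rule ls_cons) (use assms in \<open>auto simp: lperm_def\<close>)
  also have "\<dots> = -1" by (rule ls_swap) (use assms in auto)
  finally show ?thesis using ls_trans[OF l1 l2] s1 by simp
qed

lemma ls_swap4:
  assumes "distinct (a # b # c # d # R)"
  shows "list_sign (a # b # c # d # R) (c # d # a # b # R) = 1"
proof -
  have l1: "lperm (a # b # c # d # R) (a # c # d # b # R)" using assms unfolding lperm_def by auto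
  have l2: "lperm (a # c # d # b # R) (c # d # a # b # R)" using assms unfolding lperm_def by auto
  have "list_sign (a # b # c # d # R) (a # c # d # b # R) = list_sign (b # c # d # R) (c # d # b # R)"
    by (rule ls_cons) (use assms in \<open>auto simp: lperm_def\<close>)
  also have "\<dots> = 1" by (rule ls_rot) (use assms in auto)
  finally have a: "list_sign (a # b # c # d # R) (a # c # d # b # R) = 1" .
  have b: "list_sign (a # c # d # b # R) (c # d # a # b # R) = 1" by (rule ls_rot) (use assms in auto)
  show ?thesis using ls_trans[OF l1 l2] a b by simp
qed

lemma ls_swap23:
  assumes "distinct (a # b # c # R)"
  shows "list_sign (a # b # c # R) (a # c # b # R) = -1"
proof -
  have "list_sign (a # b # c # R) (a # c # b # R) = list_sign (b # c # R) (c # b # R)"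
    by (rule ls_cons) (use assms in \<open>auto simp: lperm_def\<close>)
  also have "\<dots> = -1" by (rule ls_swap) (use assms in auto)
  finally show ?thesis .
qed

lemma wf_retail:
  assumes "ograph_wf Op (V, \<iota>, T, c)" "T' \<subseteq> hedges V" "\<forall>h\<in>hedges V. h \<in> T' \<longleftrightarrow> \<iota> h \<notin> T'"
  shows "ograph_wf Op (V, \<iota>, T', c)"
  using assms unfolding wf_unfold by blast

lemma wf_flip:
  assumes wf: "ograph_wf Op (V, \<iota>, T, c)" and tT: "t \<in> T"
  shows "ograph_wf Op (V, \<iota>, T - {t} \<union> {\<iota> t}, c)"
proof (rule wf_retail[OF wf])
  note b = wf_basic[OF wf]
  note tn = tail_not_iota[OF wf tT]
  show "T - {t} \<union> {\<iota> t} \<subseteq> hedges V" using b(8) tn by auto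
  show "\<forall>h\<in>hedges V. h \<in> T - {t} \<union> {\<iota> t} \<longleftrightarrow> \<iota> h \<notin> T - {t} \<union> {\<iota> t}"
  proof
    fix h assume h: "h \<in> hedges V"
    have e: "\<iota> a = b \<longleftrightarrow> a = \<iota> b" for a b using b(6) by auto
    consider "h = t" | "h = \<iota> t" | "h \<noteq> t" "h \<noteq> \<iota> t" by blast
    then show "h \<in> T - {t} \<union> {\<iota> t} \<longleftrightarrow> \<iota> h \<notin> T - {t} \<union> {\<iota> t}"
    proof cases
      case 1 then show ?thesis using tn b(6) by auto
    next
      case 2 then show ?thesis using tn b(6) by auto
    next
      case 3
      have "\<iota> h \<noteq> t" "\<iota> h \<noteq> \<iota> t" using 3 e by auto
      moreover have "h \<in> T \<longleftrightarrow> \<iota> h \<notin> T" using b(9)[OF h] .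
      ultimately show ?thesis using 3 by blast
    qed
  qed
qed

lemma FL:
  assumes co: "cyclic_operad Op cmp ren un" and wf: "ograph_wf Op (V, \<iota>, T, c)" and tT: "t \<in> T"
  shows "contract cmp (V, \<iota>, T - {t} \<union> {\<iota> t}, c) (\<iota> t) = fscale (-1) (contract cmp (V, \<iota>, T, c) t)"
proof (cases "loopt (V, \<iota>, T, c) t")
  case True
  then have "loopt (V, \<iota>, T - {t} \<union> {\<iota> t}, c) (\<iota> t)"
    using wf_basic(6)[OF wf] by (simp add: loopt_def)
  then show ?thesis using True by (simp add: contract_eq)
next
  case False
  note b = wf_basic[OF wf]
  note tn = tail_not_iota[OF wf tT]
  have ii: "\<iota> (\<iota> t) = t" using b(6) by simp
  have nl: "\<not> loopt (V, \<iota>, T - {t} \<union> {\<iota> t}, c) (\<iota> t)"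
    using False ii by (simp add: loopt_def)
  define v where "v = vof V t"
  define w where "w = vof V (\<iota> t)"
  have vw: "v \<in> set V" "t \<in> v" "w \<in> set V" "\<iota> t \<in> w" "v \<noteq> w"
    using vof_in[OF b(3) tn(2)] vof_in[OF b(3) tn(3)] False by (auto simp: v_def w_def loopt_def)
  have disj: "v \<inter> w = {}" using b(3) vw unfolding pdisj_def by auto
  have fin: "finite v" "finite w" using b(2) vw by auto
  have filt: "filter (\<lambda>u. u \<noteq> w \<and> u \<noteq> v) V = filter (\<lambda>u. u \<noteq> v \<and> u \<noteq> w) V"
    by (rule filter_cong) auto
  have sg: "csg (V, \<iota>, T - {t} \<union> {\<iota> t}, c) (\<iota> t) = - csg (V, \<iota>, T, c) t"
  proof -
    let ?r = "filter (\<lambda>u. u \<noteq> v \<and> u \<noteq> w) V"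
    have l1: "lperm V (v # w # ?r)" unfolding lperm_def using b(1) vw by auto
    have l2: "lperm (v # w # ?r) (w # v # ?r)" unfolding lperm_def using b(1) vw by auto
    have "list_sign V (w # v # ?r) = list_sign V (v # w # ?r) * list_sign (v # w # ?r) (w # v # ?r)"
      by (rule ls_trans[OF l1 l2])
    also have "list_sign (v # w # ?r) (w # v # ?r) = -1" by (rule ls_swap) (use b(1) vw in auto)
    finally show ?thesis by (simp add: csg_def ii filt flip: v_def w_def)
  qed
  have T: "T - {t} \<union> {\<iota> t} - {\<iota> t} = T - {t}" using tn by auto
  have col: "cmp w (\<iota> t) v t (c w) (c v) = cmp v t w (\<iota> t) (c v) (c w)"
    by (rule co_comm[OF co]) (use fin disj vw b(10) in auto)
  have un: "w \<union> v = v \<union> w" "{\<iota> t, t} = {t, \<iota> t}" by auto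
  have io: "(\<lambda>h. if h = \<iota> t \<or> h = t then h else \<iota> h) = (\<lambda>h. if h = t \<or> h = \<iota> t then h else \<iota> h)"
    by auto
  have cg: "cgr cmp (V, \<iota>, T - {t} \<union> {\<iota> t}, c) (\<iota> t) = cgr cmp (V, \<iota>, T, c) t"
    unfolding cgr_unfold ii v_def[symmetric] w_def[symmetric] T filt col un io ..
  show ?thesis unfolding contract_eq sg cg using False nl by simp
qed

lemma FL1:
  assumes co: "cyclic_operad Op cmp ren un" and wf: "ograph_wf Op (V, \<iota>, T, c)" and aT: "a \<in> T"
  shows "DD cmp (V, \<iota>, T - {a} \<union> {\<iota> a}, c) (\<iota> a) b = fscale (-1) (DD cmp (V, \<iota>, T, c) a b)"
  unfolding DD_def FL[OF co wf aT] by (simp add: lin_ext_fscale)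

lemma FL2:
  assumes co: "cyclic_operad Op cmp ren un" and wf: "ograph_wf Op (V, \<iota>, T, c)" and aT: "a \<in> T" and bT: "b \<in> T"
    and ba: "b \<noteq> a" "b \<noteq> \<iota> a"
  shows "DD cmp (V, \<iota>, T - {b} \<union> {\<iota> b}, c) a (\<iota> b) = fscale (-1) (DD cmp (V, \<iota>, T, c) a b)"
proof (cases "loopt (V, \<iota>, T, c) a")
  case True
  then have "loopt (V, \<iota>, T - {b} \<union> {\<iota> b}, c) a" by (simp add: loopt_def)
  then show ?thesis using True by (simp add: DD_eq)
next
  case False
  note b = wf_basic[OF wf]
  have nl: "\<not> loopt (V, \<iota>, T - {b} \<union> {\<iota> b}, c) a" using False by (simp add: loopt_def)
  have cs: "csg (V, \<iota>, T - {b} \<union> {\<iota> b}, c) a = csg (V, \<iota>, T, c) a" by (simp add: csg_def)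
  obtain V1 i1 c1 where C: "cgr cmp (V, \<iota>, T, c) a = (V1, i1, T - {a}, c1)"
    using cgr_tuple[of cmp V \<iota> T c a] by blast
  have i1: "i1 = (\<lambda>h. if h = a \<or> h = \<iota> a then h else \<iota> h)" using C by (simp add: cgr_unfold)
  have i1b: "i1 b = \<iota> b" using i1 ba by simp
  have C2: "cgr cmp (V, \<iota>, T - {b} \<union> {\<iota> b}, c) a = (V1, i1, (T - {a}) - {b} \<union> {i1 b}, c1)"
  proof -
    have "\<iota> b \<noteq> a" using ba b(6) by metis
    then have "(T - {b} \<union> {\<iota> b}) - {a} = (T - {a}) - {b} \<union> {i1 b}" unfolding i1b using ba by auto
    then show ?thesis using C by (simp add: cgr_unfold)
  qed
  have wf1: "ograph_wf Op (V1, i1, T - {a}, c1)" using wf_cgr[OF co wf aT False] C by simp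
  have bT1: "b \<in> T - {a}" using bT ba by simp
  have "contract cmp (V1, i1, (T - {a}) - {b} \<union> {i1 b}, c1) (i1 b) = fscale (-1) (contract cmp (V1, i1, T - {a}, c1) b)"
    by (rule FL[OF co wf1 bT1])
  then show ?thesis
    unfolding DD_eq C2 C cs using False nl by (simp add: i1b)
qed

lemma retail:
  assumes co: "cyclic_operad Op cmp ren un" and wf: "ograph_wf Op (V, \<iota>, T, c)"
    and a1: "a1 \<in> T" and a2: "a2 \<in> T" and a12: "a2 \<noteq> a1" "a2 \<noteq> \<iota> a1"
    and u1: "u1 \<in> {a1, \<iota> a1}" and u2: "u2 \<in> {a2, \<iota> a2}"
  shows "ograph_wf Op (V, \<iota>, T - {a1, a2} \<union> {u1, u2}, c)"
    "DD cmp (V, \<iota>, T, c) a1 a2 = fscale ((if u1 = a1 then 1 else -1) * (if u2 = a2 then 1 else -1))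
        (DD cmp (V, \<iota>, T - {a1, a2} \<union> {u1, u2}, c) u1 u2)"
proof -
  note b = wf_basic[OF wf]
  have e: "\<iota> x = y \<longleftrightarrow> x = \<iota> y" for x y using b(6) by auto
  have d: "a1 \<noteq> \<iota> a2" "\<iota> a1 \<noteq> \<iota> a2" "\<iota> a1 \<noteq> a2" using a12 e by auto
  note t1 = tail_not_iota[OF wf a1] and t2 = tail_not_iota[OF wf a2]
  define T2 where "T2 = (if u2 = a2 then T else T - {a2} \<union> {\<iota> a2})"
  have wf2: "ograph_wf Op (V, \<iota>, T2, c)" using wf_flip[OF wf a2] wf unfolding T2_def by simp
  have a1T2: "a1 \<in> T2" using a1 a12 d unfolding T2_def by auto
  have s2: "DD cmp (V, \<iota>, T, c) a1 a2 = fscale (if u2 = a2 then 1 else -1) (DD cmp (V, \<iota>, T2, c) a1 u2)"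
  proof (cases "u2 = a2")
    case True then show ?thesis by (simp add: T2_def)
  next
    case False then have u: "u2 = \<iota> a2" using u2 by simp
    show ?thesis unfolding T2_def u using FL2[OF co wf a1 a2 a12] False u by simp
  qed
  define T3 where "T3 = (if u1 = a1 then T2 else T2 - {a1} \<union> {\<iota> a1})"
  have wf3: "ograph_wf Op (V, \<iota>, T3, c)" using wf_flip[OF wf2 a1T2] wf2 unfolding T3_def by simp
  have s3: "DD cmp (V, \<iota>, T2, c) a1 u2 = fscale (if u1 = a1 then 1 else -1) (DD cmp (V, \<iota>, T3, c) u1 u2)"
  proof (cases "u1 = a1")
    case True then show ?thesis by (simp add: T3_def)
  next
    case False then have u: "u1 = \<iota> a1" using u1 by simp
    show ?thesis unfolding T3_def u using FL1[OF co wf2 a1T2] False u by simp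
  qed
  have T3e: "T3 = T - {a1, a2} \<union> {u1, u2}"
    unfolding T3_def T2_def using u1 u2 a1 a2 a12 d t1(1) t2(1) by auto
  show "ograph_wf Op (V, \<iota>, T - {a1, a2} \<union> {u1, u2}, c)" using wf3 T3e by simp
  show "DD cmp (V, \<iota>, T, c) a1 a2 = fscale ((if u1 = a1 then 1 else -1) * (if u2 = a2 then 1 else -1))
        (DD cmp (V, \<iota>, T - {a1, a2} \<union> {u1, u2}, c) u1 u2)"
    unfolding s2 s3 T3e[symmetric] by (simp add: mult.commute)
qed


lemma loopt_tuple: "loopt (V, \<iota>, T, c) t \<longleftrightarrow> vof V t = vof V (\<iota> t)"
  by (simp add: loopt_def)

lemma pdisjD: "pdisj V \<Longrightarrow> u \<in> set V \<Longrightarrow> v \<in> set V \<Longrightarrow> u \<noteq> v \<Longrightarrow> u \<inter> v = {}"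
  unfolding pdisj_def by blast

lemma DC_disj_form:
  assumes co: "cyclic_operad Op cmp ren un" and wf: "ograph_wf Op (V, \<iota>, T, c)"
    and tT: "t \<in> T" and sT: "s \<in> T" and st: "s \<noteq> t" "s \<noteq> \<iota> t"
    and pt: "pt = vof V t" and qt: "qt = vof V (\<iota> t)" and ps: "ps = vof V s" and qs: "qs = vof V (\<iota> s)"
    and pq: "pt \<noteq> qt" "ps \<noteq> qs" and dj: "{pt, qt} \<inter> {ps, qs} = {}"
    and R: "R = filter (\<lambda>u. u \<notin> {pt, qt, ps, qs}) V"
    and nt: "nt = (pt \<union> qt) - {t, \<iota> t}" and ns: "ns = (ps \<union> qs) - {s, \<iota> s}"
    and J: "J = (\<lambda>h. if h \<in> {t, \<iota> t, s, \<iota> s} then h else \<iota> h)"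
    and C: "C = (\<lambda>u. if u = ns then cmp ps s qs (\<iota> s) (c ps) (c qs)
                else if u = nt then cmp pt t qt (\<iota> t) (c pt) (c qt) else if u \<in> set R then c u else 0)"
  shows "DD cmp (V, \<iota>, T, c) t s = fscale (list_sign V (pt # qt # ps # qs # R)) (gen (ns # nt # R, J, T - {t} - {s}, C))"
    and "ograph_wf Op (ns # nt # R, J, T - {t} - {s}, C)"
proof -
  note b = wf_basic[OF wf]
  note tn = tail_not_iota[OF wf tT] and sn = tail_not_iota[OF wf sT]
  have e: "\<iota> x = y \<longleftrightarrow> x = \<iota> y" for x y using b(6) by auto
  have nlt: "\<not> loopt (V, \<iota>, T, c) t" using pq pt qt by (simp add: loopt_tuple)
  have vt: "pt \<in> set V" "t \<in> pt" "qt \<in> set V" "\<iota> t \<in> qt"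
    using vof_in[OF b(3) tn(2)] vof_in[OF b(3) tn(3)] pt qt by auto
  have vs: "ps \<in> set V" "s \<in> ps" "qs \<in> set V" "\<iota> s \<in> qs"
    using vof_in[OF b(3) sn(2)] vof_in[OF b(3) sn(3)] ps qs by auto
  define rt where "rt = filter (\<lambda>u. u \<noteq> pt \<and> u \<noteq> qt) V"
  define jt where "jt = (\<lambda>h. if h = t \<or> h = \<iota> t then h else \<iota> h)"
  define ct where "ct = (\<lambda>u. if u = nt then cmp pt t qt (\<iota> t) (c pt) (c qt) else if u \<in> set rt then c u else 0)"
  have C1: "cgr cmp (V, \<iota>, T, c) t = (nt # rt, jt, T - {t}, ct)"
    unfolding cgr_unfold rt_def jt_def ct_def nt pt qt ..
  have wf1: "ograph_wf Op (nt # rt, jt, T - {t}, ct)" using wf_cgr[OF co wf tT nlt] C1 by simp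
  have ntV: "nt \<notin> set V" using n0_notin'[OF co wf tT nlt] nt pt qt by simp
  have sH: "s \<in> hedges V" "s \<noteq> t" "s \<noteq> \<iota> t" using sn st by auto
  have isH: "\<iota> s \<in> hedges V" "\<iota> s \<noteq> t" "\<iota> s \<noteq> \<iota> t" using sn st e by auto
  have vofs: "vof (nt # rt) s = ps" "vof (nt # rt) (\<iota> s) = qs"
    using vof_cgr'[OF co wf tT nlt sH] vof_cgr'[OF co wf tT nlt isH] C1 dj pt qt ps qs nt by auto
  have jts: "jt s = \<iota> s" using st by (simp add: jt_def)
  have vofs2: "vof (nt # rt) (jt s) = qs" using vofs jts by simp
  have sT1: "s \<in> T - {t}" using sT st by simp
  have nls: "\<not> loopt (nt # rt, jt, T - {t}, ct) s" using vofs jts pq by (simp add: loopt_tuple)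
  have filt: "filter (\<lambda>u. u \<noteq> ps \<and> u \<noteq> qs) (nt # rt) = nt # R"
  proof -
    have "nt \<noteq> ps" "nt \<noteq> qs" using ntV vs by auto
    moreover have "filter (\<lambda>u. u \<noteq> ps \<and> u \<noteq> qs) rt = R"
      unfolding rt_def R by (simp add: filter_filter)
    ultimately show ?thesis by simp
  qed
  have ctp: "ct ps = c ps" "ct qs = c qs"
    using vs dj ntV unfolding ct_def rt_def by auto
  have Jeq: "(\<lambda>h. if h = s \<or> h = jt s then h else jt h) = J"
    unfolding J jts jt_def using st b(6) by (auto simp: fun_eq_iff)
  have nsne: "ns \<noteq> nt"
  proof
    assume "ns = nt"
    have nls0: "\<not> loopt (V, \<iota>, T, c) s" using pq ps qs by (simp add: loopt_tuple)
    have "card ns \<ge> 2" using card_n0'[OF co wf sT nls0] ns ps qs by simp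
    then have "ns \<noteq> {}" by auto
    moreover have "ns \<subseteq> ps \<union> qs" "nt \<subseteq> pt \<union> qt" unfolding ns nt by auto
    moreover have "ps \<noteq> pt" "ps \<noteq> qt" "qs \<noteq> pt" "qs \<noteq> qt" using dj by auto
    then have "ps \<inter> pt = {}" "ps \<inter> qt = {}" "qs \<inter> pt = {}" "qs \<inter> qt = {}"
      using pdisjD[OF b(3)] vt vs by auto
    ultimately show False using \<open>ns = nt\<close> by blast
  qed
  have Ceq: "(\<lambda>u. if u = (ps \<union> qs) - {s, jt s} then cmp ps s qs (jt s) (ct ps) (ct qs)
        else if u \<in> set (filter (\<lambda>u. u \<noteq> ps \<and> u \<noteq> qs) (nt # rt)) then ct u else 0) = C"
  proof
    fix u
    show "(if u = (ps \<union> qs) - {s, jt s} then cmp ps s qs (jt s) (ct ps) (ct qs)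
        else if u \<in> set (filter (\<lambda>u. u \<noteq> ps \<and> u \<noteq> qs) (nt # rt)) then ct u else 0) = C u"
      unfolding filt C jts ctp ns[symmetric] using ntV nsne unfolding ct_def R rt_def by auto
  qed
  have C2: "cgr cmp (nt # rt, jt, T - {t}, ct) s = (ns # nt # R, J, T - {t} - {s}, C)"
  proof -
    have "cgr cmp (nt # rt, jt, T - {t}, ct) s = (((ps \<union> qs) - {s, jt s}) # filter (\<lambda>u. u \<noteq> ps \<and> u \<noteq> qs) (nt # rt),
       (\<lambda>h. if h = s \<or> h = jt s then h else jt h), T - {t} - {s},
       (\<lambda>u. if u = (ps \<union> qs) - {s, jt s} then cmp ps s qs (jt s) (ct ps) (ct qs)
        else if u \<in> set (filter (\<lambda>u. u \<noteq> ps \<and> u \<noteq> qs) (nt # rt)) then ct u else 0))"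
      unfolding cgr_unfold vofs(1) vofs2 ..
    from this[unfolded Ceq Jeq, unfolded filt jts ns[symmetric]] show ?thesis .
  qed
  show wfG: "ograph_wf Op (ns # nt # R, J, T - {t} - {s}, C)"
    using wf_cgr[OF co wf1 sT1 nls] C2 by simp
  have sign: "csg (V, \<iota>, T, c) t * csg (nt # rt, jt, T - {t}, ct) s = list_sign V (pt # qt # ps # qs # R)"
  proof -
    have c1: "csg (V, \<iota>, T, c) t = list_sign V (pt # qt # rt)"
      unfolding csg_def rt_def pt qt by simp
    have c2: "csg (nt # rt, jt, T - {t}, ct) s = list_sign (nt # rt) (ps # qs # nt # R)"
    proof -
      have "csg (nt # rt, jt, T - {t}, ct) s = list_sign (nt # rt) (vof (nt # rt) s # vof (nt # rt) (jt s)
          # filter (\<lambda>u. u \<noteq> vof (nt # rt) s \<and> u \<noteq> vof (nt # rt) (jt s)) (nt # rt))"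
        by (simp add: csg_def)
      then show ?thesis unfolding vofs(1) vofs2 filt .
    qed
    have dR: "distinct R" "ps \<notin> set R" "qs \<notin> set R" "nt \<notin> set R" "set R = set V - {pt, qt, ps, qs}"
      using b(1) ntV unfolding R by auto
    have drt: "distinct rt" "set rt = set V - {pt, qt}" "nt \<notin> set rt" using b(1) ntV unfolding rt_def by auto
    have dL: "distinct (nt # ps # qs # R)" using dR pq vs ntV by auto
    have lrt: "lperm rt (ps # qs # R)" unfolding lperm_def using drt dR dL vs dj by auto
    have la: "lperm (nt # rt) (nt # ps # qs # R)" using lrt drt unfolding lperm_def by auto
    have lb: "lperm (nt # ps # qs # R) (ps # qs # nt # R)" using dL unfolding lperm_def by auto
    have "list_sign (nt # rt) (ps # qs # nt # R) = list_sign (nt # rt) (nt # ps # qs # R) * list_sign (nt # ps # qs # R) (ps # qs # nt # R)"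
      by (rule ls_trans[OF la lb])
    also have "list_sign (nt # ps # qs # R) (ps # qs # nt # R) = 1" by (rule ls_rot[OF dL])
    finally have e2: "list_sign (nt # rt) (ps # qs # nt # R) = list_sign (nt # rt) (nt # ps # qs # R)" by simp
    have "list_sign V (pt # qt # rt) * list_sign (nt # rt) (nt # ps # qs # R) = list_sign V (pt # qt # ps # qs # R)"
      unfolding rt_def by (rule ls_step) (use b(1) vt pq ntV lrt in \<open>auto simp: rt_def\<close>)
    then show ?thesis unfolding c1 c2 e2 .
  qed
  show "DD cmp (V, \<iota>, T, c) t s = fscale (list_sign V (pt # qt # ps # qs # R)) (gen (ns # nt # R, J, T - {t} - {s}, C))"
    unfolding DD_eq C1 contract_eq C2 using nlt nls sign[symmetric] by (simp add: mult.commute)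
qed

lemma DC_A_form:
  assumes co: "cyclic_operad Op cmp ren un" and wf: "ograph_wf Op (V, \<iota>, T, c)"
    and tT: "t \<in> T" and sT: "s \<in> T" and st: "s \<noteq> t" "s \<noteq> \<iota> t"
    and pt: "P = vof V t" and qt: "qt = vof V (\<iota> t)" and ps: "P = vof V s" and qs: "qs = vof V (\<iota> s)"
    and pq: "P \<noteq> qt" "P \<noteq> qs" "qt \<noteq> qs"
    and R: "R = filter (\<lambda>u. u \<notin> {P, qt, qs}) V"
    and nt: "nt = (P \<union> qt) - {t, \<iota> t}" and N: "N = (nt \<union> qs) - {s, \<iota> s}"
    and J: "J = (\<lambda>h. if h \<in> {t, \<iota> t, s, \<iota> s} then h else \<iota> h)"
    and C: "C = (\<lambda>u. if u = N then cmp nt s qs (\<iota> s) (cmp P t qt (\<iota> t) (c P) (c qt)) (c qs)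
                else if u \<in> set R then c u else 0)"
  shows "DD cmp (V, \<iota>, T, c) t s = fscale (list_sign V (P # qt # qs # R)) (gen (N # R, J, T - {t} - {s}, C))"
    and "ograph_wf Op (N # R, J, T - {t} - {s}, C)"
proof -
  note b = wf_basic[OF wf]
  note tn = tail_not_iota[OF wf tT] and sn = tail_not_iota[OF wf sT]
  have e: "\<iota> x = y \<longleftrightarrow> x = \<iota> y" for x y using b(6) by auto
  have nlt: "\<not> loopt (V, \<iota>, T, c) t" using pq pt qt by (simp add: loopt_tuple)
  have vt: "P \<in> set V" "t \<in> P" "qt \<in> set V" "\<iota> t \<in> qt"
    using vof_in[OF b(3) tn(2)] vof_in[OF b(3) tn(3)] pt qt by auto
  have vs: "s \<in> P" "qs \<in> set V" "\<iota> s \<in> qs"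
    using vof_in[OF b(3) sn(2)] vof_in[OF b(3) sn(3)] ps qs by auto
  define rt where "rt = filter (\<lambda>u. u \<noteq> P \<and> u \<noteq> qt) V"
  define jt where "jt = (\<lambda>h. if h = t \<or> h = \<iota> t then h else \<iota> h)"
  define ct where "ct = (\<lambda>u. if u = nt then cmp P t qt (\<iota> t) (c P) (c qt) else if u \<in> set rt then c u else 0)"
  have C1: "cgr cmp (V, \<iota>, T, c) t = (nt # rt, jt, T - {t}, ct)"
    unfolding cgr_unfold rt_def jt_def ct_def nt pt qt ..
  have wf1: "ograph_wf Op (nt # rt, jt, T - {t}, ct)" using wf_cgr[OF co wf tT nlt] C1 by simp
  have ntV: "nt \<notin> set V" using n0_notin'[OF co wf tT nlt] nt pt qt by simp
  have sH: "s \<in> hedges V" "s \<noteq> t" "s \<noteq> \<iota> t" using sn st by auto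
  have isH: "\<iota> s \<in> hedges V" "\<iota> s \<noteq> t" "\<iota> s \<noteq> \<iota> t" using sn st e by auto
  have vofs: "vof (nt # rt) s = nt" "vof (nt # rt) (\<iota> s) = qs"
    using vof_cgr'[OF co wf tT nlt sH] vof_cgr'[OF co wf tT nlt isH] C1 pq pt qt ps qs nt by auto
  have jts: "jt s = \<iota> s" using st by (simp add: jt_def)
  have vofs2: "vof (nt # rt) (jt s) = qs" using vofs jts by simp
  have sT1: "s \<in> T - {t}" using sT st by simp
  have nqs: "nt \<noteq> qs" using ntV vs by auto
  have nls: "\<not> loopt (nt # rt, jt, T - {t}, ct) s" using vofs jts nqs by (simp add: loopt_tuple)
  have filt: "filter (\<lambda>u. u \<noteq> nt \<and> u \<noteq> qs) (nt # rt) = R"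
  proof -
    have "filter (\<lambda>u. u \<noteq> nt \<and> u \<noteq> qs) rt = R"
      unfolding rt_def R using ntV by (auto simp add: filter_filter intro!: filter_cong)
    then show ?thesis by simp
  qed
  have ctp: "ct nt = cmp P t qt (\<iota> t) (c P) (c qt)" "ct qs = c qs"
    using vs pq ntV unfolding ct_def rt_def by auto
  have Jeq: "(\<lambda>h. if h = s \<or> h = jt s then h else jt h) = J"
    unfolding J jts jt_def using st b(6) by (auto simp: fun_eq_iff)
  have Ceq: "(\<lambda>u. if u = (nt \<union> qs) - {s, jt s} then cmp nt s qs (jt s) (ct nt) (ct qs)
        else if u \<in> set (filter (\<lambda>u. u \<noteq> nt \<and> u \<noteq> qs) (nt # rt)) then ct u else 0) = C"
  proof
    fix u
    show "(if u = (nt \<union> qs) - {s, jt s} then cmp nt s qs (jt s) (ct nt) (ct qs)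
        else if u \<in> set (filter (\<lambda>u. u \<noteq> nt \<and> u \<noteq> qs) (nt # rt)) then ct u else 0) = C u"
      unfolding filt C jts ctp N[symmetric] using ntV unfolding ct_def R rt_def by auto
  qed
  have C2: "cgr cmp (nt # rt, jt, T - {t}, ct) s = (N # R, J, T - {t} - {s}, C)"
  proof -
    have "cgr cmp (nt # rt, jt, T - {t}, ct) s = (((nt \<union> qs) - {s, jt s}) # filter (\<lambda>u. u \<noteq> nt \<and> u \<noteq> qs) (nt # rt),
       (\<lambda>h. if h = s \<or> h = jt s then h else jt h), T - {t} - {s},
       (\<lambda>u. if u = (nt \<union> qs) - {s, jt s} then cmp nt s qs (jt s) (ct nt) (ct qs)
        else if u \<in> set (filter (\<lambda>u. u \<noteq> nt \<and> u \<noteq> qs) (nt # rt)) then ct u else 0))"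
      unfolding cgr_unfold vofs(1) vofs2 ..
    from this[unfolded Ceq Jeq, unfolded filt jts N[symmetric]] show ?thesis .
  qed
  show wfG: "ograph_wf Op (N # R, J, T - {t} - {s}, C)"
    using wf_cgr[OF co wf1 sT1 nls] C2 by simp
  have sign: "csg (V, \<iota>, T, c) t * csg (nt # rt, jt, T - {t}, ct) s = list_sign V (P # qt # qs # R)"
  proof -
    have c1: "csg (V, \<iota>, T, c) t = list_sign V (P # qt # rt)"
      unfolding csg_def rt_def pt qt by simp
    have c2: "csg (nt # rt, jt, T - {t}, ct) s = list_sign (nt # rt) (nt # qs # R)"
    proof -
      have "csg (nt # rt, jt, T - {t}, ct) s = list_sign (nt # rt) (vof (nt # rt) s # vof (nt # rt) (jt s)
          # filter (\<lambda>u. u \<noteq> vof (nt # rt) s \<and> u \<noteq> vof (nt # rt) (jt s)) (nt # rt))"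
        by (simp add: csg_def)
      then show ?thesis unfolding vofs(1) vofs2 filt .
    qed
    have dR: "distinct R" "qs \<notin> set R" "set R = set V - {P, qt, qs}"
      using b(1) unfolding R by auto
    have drt: "distinct rt" "set rt = set V - {P, qt}" using b(1) unfolding rt_def by auto
    have lrt: "lperm rt (qs # R)" unfolding lperm_def using drt dR vs pq by auto
    have "list_sign V (P # qt # rt) * list_sign (nt # rt) (nt # qs # R) = list_sign V (P # qt # qs # R)"
      unfolding rt_def by (rule ls_step) (use b(1) vt pq ntV lrt in \<open>auto simp: rt_def\<close>)
    then show ?thesis unfolding c1 c2 .
  qed
  show "DD cmp (V, \<iota>, T, c) t s = fscale (list_sign V (P # qt # qs # R)) (gen (N # R, J, T - {t} - {s}, C))"
    unfolding DD_eq C1 contract_eq C2 using nlt nls sign[symmetric] by (simp add: mult.commute)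
qed


lemma DD_zero:
  assumes co: "cyclic_operad Op cmp ren un" and wf: "ograph_wf Op (V, \<iota>, T, c)"
    and tT: "t \<in> T" and sT: "s \<in> T" and st: "s \<noteq> t" "s \<noteq> \<iota> t"
    and z: "vof V t = vof V (\<iota> t) \<or> vof V s = vof V (\<iota> s) \<or>
            ({vof V s, vof V (\<iota> s)} \<subseteq> {vof V t, vof V (\<iota> t)})"
  shows "DD cmp (V, \<iota>, T, c) t s = 0"
proof (cases "loopt (V, \<iota>, T, c) t")
  case True then show ?thesis by (simp add: DD_eq)
next
  case False
  note b = wf_basic[OF wf]
  note sn = tail_not_iota[OF wf sT]
  have e: "\<iota> x = y \<longleftrightarrow> x = \<iota> y" for x y using b(6) by auto
  have sH: "s \<in> hedges V" "s \<noteq> t" "s \<noteq> \<iota> t" using sn st by auto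
  have isH: "\<iota> s \<in> hedges V" "\<iota> s \<noteq> t" "\<iota> s \<noteq> \<iota> t" using sn st e by auto
  obtain V1 i1 c1 where C1: "cgr cmp (V, \<iota>, T, c) t = (V1, i1, T - {t}, c1)"
    using cgr_tuple[of cmp V \<iota> T c t] by blast
  have i1: "i1 s = \<iota> s" using C1 st by (auto simp: cgr_unfold)
  have v1: "vof V1 s = vof V1 (\<iota> s)"
    using vof_cgr'[OF co wf tT False sH] vof_cgr'[OF co wf tT False isH] C1 z False
    by (auto simp: loopt_tuple)
  have "loopt (V1, i1, T - {t}, c1) s" using v1 i1 by (simp add: loopt_tuple)
  then show ?thesis unfolding DD_eq C1 contract_eq using False by simp
qed

lemma ASC:
  assumes co: "cyclic_operad Op cmp ren un"
    and fin: "finite P" "finite Q1" "finite Q2"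
    and dj: "P \<inter> Q1 = {}" "P \<inter> Q2 = {}" "Q1 \<inter> Q2 = {}"
    and ts: "t \<in> P" "s \<in> P" "t \<noteq> s" "t' \<in> Q1" "s' \<in> Q2"
    and col: "cP \<in> Op P" "cQ1 \<in> Op Q1" "cQ2 \<in> Op Q2"
  shows "cmp ((P \<union> Q1) - {t, t'}) s Q2 s' (cmp P t Q1 t' cP cQ1) cQ2
       = cmp ((P \<union> Q2) - {s, s'}) t Q1 t' (cmp P s Q2 s' cP cQ2) cQ1"
proof -
  have e1: "(P \<union> Q1) - {t, t'} = (Q1 - {t'}) \<union> (P - {t})" using dj ts by auto
  have e2: "(P \<union> Q2) - {s, s'} = (P - {s}) \<union> (Q2 - {s'})" using dj ts by auto
  have "cmp P t Q1 t' cP cQ1 = cmp Q1 t' P t cQ1 cP"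
    by (rule co_comm[OF co]) (use fin dj ts col in auto)
  then have "cmp ((P \<union> Q1) - {t, t'}) s Q2 s' (cmp P t Q1 t' cP cQ1) cQ2
      = cmp ((Q1 - {t'}) \<union> (P - {t})) s Q2 s' (cmp Q1 t' P t cQ1 cP) cQ2" unfolding e1 by simp
  also have "\<dots> = cmp Q1 t' ((P - {s}) \<union> (Q2 - {s'})) t cQ1 (cmp P s Q2 s' cP cQ2)"
    by (rule co_assoc[OF co]) (use fin dj ts col in auto)
  also have "\<dots> = cmp ((P - {s}) \<union> (Q2 - {s'})) t Q1 t' (cmp P s Q2 s' cP cQ2) cQ1"
  proof (rule co_comm[OF co])
    show "cmp P s Q2 s' cP cQ2 \<in> Op ((P - {s}) \<union> (Q2 - {s'}))"
      by (rule co_cmp_in[OF co]) (use fin dj ts col in auto)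
  qed (use fin dj ts col in auto)
  finally show ?thesis unfolding e2 .
qed

lemma card_diff_tails:
  assumes "u1 \<in> T'" "u2 \<in> T'"
  shows "(T - {u1} - {u2}) - (T' - {u2} - {u1}) = T - T'"
  using assms by auto

lemma DC0:
  assumes co: "cyclic_operad Op cmp ren un"
    and wf: "ograph_wf Op (V, \<iota>, T, c)" and wf': "ograph_wf Op (V, \<iota>, T', c)"
    and u1: "u1 \<in> T" "u1 \<in> T'" and u2: "u2 \<in> T" "u2 \<in> T'" and u12: "u2 \<noteq> u1" "u2 \<noteq> \<iota> u1"
    and cfg: "vof V u1 = vof V (\<iota> u1) \<or> vof V u2 = vof V (\<iota> u2)
      \<or> {vof V u1, vof V (\<iota> u1)} = {vof V u2, vof V (\<iota> u2)}
      \<or> {vof V u1, vof V (\<iota> u1)} \<inter> {vof V u2, vof V (\<iota> u2)} = {}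
      \<or> (vof V u1 = vof V u2 \<and> vof V (\<iota> u1) \<noteq> vof V (\<iota> u2))"
  shows "DD cmp (V, \<iota>, T, c) u1 u2 + fscale ((-1) ^ card (T - T')) (DD cmp (V, \<iota>, T', c) u2 u1) \<in> fspan (og_rel Op ren)"
proof -
  note b = wf_basic[OF wf]
  have e: "\<iota> x = y \<longleftrightarrow> x = \<iota> y" for x y using b(6) by auto
  have u21: "u1 \<noteq> u2" "u1 \<noteq> \<iota> u2" using u12 e by auto
  define p1 where "p1 = vof V u1"
  define q1 where "q1 = vof V (\<iota> u1)"
  define p2 where "p2 = vof V u2"
  define q2 where "q2 = vof V (\<iota> u2)"
  note tn1 = tail_not_iota[OF wf u1(1)] and tn2 = tail_not_iota[OF wf u2(1)]
  have vv: "p1 \<in> set V" "u1 \<in> p1" "q1 \<in> set V" "\<iota> u1 \<in> q1" "p2 \<in> set V" "u2 \<in> p2" "q2 \<in> set V" "\<iota> u2 \<in> q2"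
    using vof_in[OF b(3) tn1(2)] vof_in[OF b(3) tn1(3)] vof_in[OF b(3) tn2(2)] vof_in[OF b(3) tn2(3)]
    by (auto simp: p1_def q1_def p2_def q2_def)
  let ?s = "(-1::real) ^ card (T - T')"
  have ss: "?s * ?s = 1" by (simp flip: power_add mult_2)
  have cfg': "p1 = q1 \<or> p2 = q2 \<or> {p1, q1} = {p2, q2} \<or> {p1, q1} \<inter> {p2, q2} = {} \<or> (p1 = p2 \<and> q1 \<noteq> q2)"
    using cfg unfolding p1_def[symmetric] q1_def[symmetric] p2_def[symmetric] q2_def[symmetric] .
  consider (deg) "p1 = q1 \<or> p2 = q2 \<or> {p1, q1} = {p2, q2}"
    | (disj) "p1 \<noteq> q1" "p2 \<noteq> q2" "{p1, q1} \<inter> {p2, q2} = {}"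
    | (A) "p1 \<noteq> q1" "p2 \<noteq> q2" "p1 = p2" "q1 \<noteq> q2"
  proof (cases "p1 = q1 \<or> p2 = q2 \<or> {p1, q1} = {p2, q2}")
    case True then show thesis using that(1) by simp
  next
    case False
    then have n: "p1 \<noteq> q1" "p2 \<noteq> q2" by simp_all
    show thesis
    proof (cases "{p1, q1} \<inter> {p2, q2} = {}")
      case True then show thesis using that(2) n by simp
    next
      case False2: False
      have "\<not> ({p1, q1} \<inter> {p2, q2} = {})" using False2 .
      then have "p1 = p2 \<and> q1 \<noteq> q2" using cfg' False by blast
      then show thesis using that(3) n by simp
    qed
  qed
  then show ?thesis
  proof cases
    case deg
    have z1: "DD cmp (V, \<iota>, T, c) u1 u2 = 0"
      by (rule DD_zero[OF co wf u1(1) u2(1) u12]) (use deg in \<open>auto simp: p1_def q1_def p2_def q2_def\<close>)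
    have z2: "DD cmp (V, \<iota>, T', c) u2 u1 = 0"
      by (rule DD_zero[OF co wf' u2(2) u1(2) u21]) (use deg in \<open>auto simp: p1_def q1_def p2_def q2_def\<close>)
    show ?thesis by (simp add: z1 z2)
  next
    case disj
    define R where "R = filter (\<lambda>u. u \<notin> {p1, q1, p2, q2}) V"
    define n1 where "n1 = (p1 \<union> q1) - {u1, \<iota> u1}"
    define n2 where "n2 = (p2 \<union> q2) - {u2, \<iota> u2}"
    define J where "J = (\<lambda>h. if h \<in> {u1, \<iota> u1, u2, \<iota> u2} then h else \<iota> h)"
    define C where "C = (\<lambda>u. if u = n2 then cmp p2 u2 q2 (\<iota> u2) (c p2) (c q2)
                else if u = n1 then cmp p1 u1 q1 (\<iota> u1) (c p1) (c q1) else if u \<in> set R then c u else 0)"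
    define C' where "C' = (\<lambda>u. if u = n1 then cmp p1 u1 q1 (\<iota> u1) (c p1) (c q1)
                else if u = n2 then cmp p2 u2 q2 (\<iota> u2) (c p2) (c q2) else if u \<in> set R then c u else 0)"
    have R': "R = filter (\<lambda>u. u \<notin> {p2, q2, p1, q1}) V" unfolding R_def by (simp add: insert_commute)
    have J': "J = (\<lambda>h. if h \<in> {u2, \<iota> u2, u1, \<iota> u1} then h else \<iota> h)" unfolding J_def by (simp add: insert_commute)
    have F1: "DD cmp (V, \<iota>, T, c) u1 u2 = fscale (list_sign V (p1 # q1 # p2 # q2 # R)) (gen (n2 # n1 # R, J, T - {u1} - {u2}, C))"
     and W1: "ograph_wf Op (n2 # n1 # R, J, T - {u1} - {u2}, C)"
      by (rule DC_disj_form[OF co wf u1(1) u2(1) u12 p1_def q1_def p2_def q2_def disj R_def n1_def n2_def J_def C_def])+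
    have disj': "{p2, q2} \<inter> {p1, q1} = {}" using disj(3) by auto
    have F2: "DD cmp (V, \<iota>, T', c) u2 u1 = fscale (list_sign V (p2 # q2 # p1 # q1 # R)) (gen (n1 # n2 # R, J, T' - {u2} - {u1}, C'))"
     and W2: "ograph_wf Op (n1 # n2 # R, J, T' - {u2} - {u1}, C')"
      by (rule DC_disj_form[OF co wf' u2(2) u1(2) u21 p2_def q2_def p1_def q1_def disj(2) disj(1) disj' R' n2_def n1_def J' C'_def])+
    have dist: "distinct (n2 # n1 # R)" using W1 wf_basic(1) by blast
    have CC: "C' = C" unfolding C_def C'_def using dist by (auto simp: fun_eq_iff)
    have dl: "distinct (p1 # q1 # p2 # q2 # R)" using disj b(1) vv unfolding R_def by auto
    have l1: "lperm V (p1 # q1 # p2 # q2 # R)" unfolding lperm_def using dl b(1) vv unfolding R_def by auto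
    have l2: "lperm (p1 # q1 # p2 # q2 # R) (p2 # q2 # p1 # q1 # R)" unfolding lperm_def using dl by auto
    have sg: "list_sign V (p2 # q2 # p1 # q1 # R) = list_sign V (p1 # q1 # p2 # q2 # R)"
      using ls_trans[OF l1 l2] ls_swap4[OF dl] by simp
    have L: "list_sign (n2 # n1 # R) (n1 # n2 # R) = -1" by (rule ls_swap[OF dist])
    have cd: "card ((T - {u1} - {u2}) - (T' - {u2} - {u1})) = card (T - T')"
      using card_diff_tails[OF u1(2) u2(2)] by simp
    show ?thesis
      unfolding F1 F2 CC fscale_fscale
      by (rule og_rel_intro[OF W1 W2[unfolded CC]]) (auto simp: L cd sg ss mult.assoc[symmetric])
  next
    case A
    define P where "P = p1"
    have pP: "P = vof V u1" "P = vof V u2" using A by (auto simp: P_def p1_def p2_def)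
    define R where "R = filter (\<lambda>u. u \<notin> {P, q1, q2}) V"
    define n1 where "n1 = (P \<union> q1) - {u1, \<iota> u1}"
    define n2 where "n2 = (P \<union> q2) - {u2, \<iota> u2}"
    define N where "N = (n1 \<union> q2) - {u2, \<iota> u2}"
    define N' where "N' = (n2 \<union> q1) - {u1, \<iota> u1}"
    define J where "J = (\<lambda>h. if h \<in> {u1, \<iota> u1, u2, \<iota> u2} then h else \<iota> h)"
    define C where "C = (\<lambda>u. if u = N then cmp n1 u2 q2 (\<iota> u2) (cmp P u1 q1 (\<iota> u1) (c P) (c q1)) (c q2)
                else if u \<in> set R then c u else 0)"
    define C' where "C' = (\<lambda>u. if u = N' then cmp n2 u1 q1 (\<iota> u1) (cmp P u2 q2 (\<iota> u2) (c P) (c q2)) (c q1)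
                else if u \<in> set R then c u else 0)"
    have pq: "P \<noteq> q1" "P \<noteq> q2" "q1 \<noteq> q2" using A by (auto simp: P_def)
    have R': "R = filter (\<lambda>u. u \<notin> {P, q2, q1}) V" unfolding R_def by (simp add: insert_commute)
    have J': "J = (\<lambda>h. if h \<in> {u2, \<iota> u2, u1, \<iota> u1} then h else \<iota> h)" unfolding J_def by (simp add: insert_commute)
    note DA1 = DC_A_form[of Op cmp ren un V \<iota> T c u1 u2 P q1 q2 R n1 N J C, OF co wf u1(1) u2(1) u12 pP(1) q1_def pP(2) q2_def pq R_def n1_def N_def J_def C_def]
    have F1: "DD cmp (V, \<iota>, T, c) u1 u2 = fscale (list_sign V (P # q1 # q2 # R)) (gen (N # R, J, T - {u1} - {u2}, C))"
      by (rule DA1(1))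
    have W1: "ograph_wf Op (N # R, J, T - {u1} - {u2}, C)" by (rule DA1(2))
    have pq': "P \<noteq> q2" "P \<noteq> q1" "q2 \<noteq> q1" using pq by auto
    note DA2 = DC_A_form[of Op cmp ren un V \<iota> T' c u2 u1 P q2 q1 R n2 N' J C', OF co wf' u2(2) u1(2) u21 pP(2) q2_def pP(1) q1_def pq' R' n2_def N'_def J' C'_def]
    have F2: "DD cmp (V, \<iota>, T', c) u2 u1 = fscale (list_sign V (P # q2 # q1 # R)) (gen (N' # R, J, T' - {u2} - {u1}, C'))"
      by (rule DA2(1))
    have W2: "ograph_wf Op (N' # R, J, T' - {u2} - {u1}, C')" by (rule DA2(2))
    have dj: "P \<inter> q1 = {}" "P \<inter> q2 = {}" "q1 \<inter> q2 = {}"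
      using pdisjD[OF b(3)] vv(1,3,7) pq unfolding P_def by auto
    have vP: "u1 \<in> P" "u2 \<in> P" using vv A by (auto simp: P_def)
    have nm: "u1 \<notin> q2" "\<iota> u1 \<notin> q2" "u2 \<notin> q1" "\<iota> u2 \<notin> q1"
      using dj vP vv(4,8) by blast+
    have NN: "N' = N" unfolding N_def N'_def n1_def n2_def using nm by blast
    have fin: "finite P" "finite q1" "finite q2" using b(2) vv unfolding P_def by auto
    have col: "c P \<in> Op P" "c q1 \<in> Op q1" "c q2 \<in> Op q2" using b(10) vv unfolding P_def by auto
    have asc: "cmp n1 u2 q2 (\<iota> u2) (cmp P u1 q1 (\<iota> u1) (c P) (c q1)) (c q2)
        = cmp n2 u1 q1 (\<iota> u1) (cmp P u2 q2 (\<iota> u2) (c P) (c q2)) (c q1)"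
      unfolding n1_def n2_def
      by (rule ASC[OF co fin dj vP]) (use u21 vv col in auto)
    have CC: "C' = C" unfolding C_def C'_def NN asc ..
    have dl: "distinct (P # q1 # q2 # R)" using pq b(1) vv unfolding R_def P_def by auto
    have l1: "lperm V (P # q1 # q2 # R)" unfolding lperm_def using dl b(1) vv unfolding R_def P_def by auto
    have l2: "lperm (P # q1 # q2 # R) (P # q2 # q1 # R)" unfolding lperm_def using dl by auto
    have sg: "list_sign V (P # q2 # q1 # R) = - list_sign V (P # q1 # q2 # R)"
      using ls_trans[OF l1 l2] ls_swap23[OF dl] by simp
    have dist: "distinct (N # R)" using W1 wf_basic(1) by blast
    have L: "list_sign (N # R) (N # R) = 1" by (rule ls_refl[OF dist])
    have cd: "card ((T - {u1} - {u2}) - (T' - {u2} - {u1})) = card (T - T')"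
      using card_diff_tails[OF u1(2) u2(2)] by simp
    show ?thesis
      unfolding F1 F2 CC NN fscale_fscale
      by (rule og_rel_intro[OF W1 W2[unfolded CC NN]]) (auto simp: L cd sg ss mult.assoc[symmetric])
  qed
qed


definition sgb :: "bool \<Rightarrow> real" where "sgb P = (if P then 1 else -1)"

lemma sgb_sq[simp]: "sgb P * sgb P = 1" by (simp add: sgb_def)

lemma sgb_tri: "u \<in> {a, a'} \<Longrightarrow> b \<in> {a, a'} \<Longrightarrow> a \<noteq> a' \<Longrightarrow> sgb (u = a) = sgb (a = b) * sgb (u = b)"
  by (auto simp: sgb_def)

lemma DCG:
  assumes co: "cyclic_operad Op cmp ren un"
    and wf: "ograph_wf Op (V, \<iota>, T, c)" and wf': "ograph_wf Op (V, \<iota>, T', c)"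
    and a1: "a1 \<in> T" and a2: "a2 \<in> T" and a12: "a2 \<noteq> a1" "a2 \<noteq> \<iota> a1"
    and b1: "b1 \<in> T'" "b1 \<in> {a1, \<iota> a1}" and b2: "b2 \<in> T'" "b2 \<in> {a2, \<iota> a2}"
  shows "DD cmp (V, \<iota>, T, c) a1 a2 + fscale ((-1) ^ card (T - T')) (DD cmp (V, \<iota>, T', c) b2 b1) \<in> fspan (og_rel Op ren)"
proof -
  note b = wf_basic[OF wf]
  have e: "\<iota> x = y \<longleftrightarrow> x = \<iota> y" for x y using b(6) by auto
  note t1 = tail_not_iota[OF wf a1] and t2 = tail_not_iota[OF wf a2]
  note t1' = tail_not_iota[OF wf' b1(1)] and t2' = tail_not_iota[OF wf' b2(1)]
  have d: "a1 \<noteq> \<iota> a2" "\<iota> a1 \<noteq> \<iota> a2" "\<iota> a1 \<noteq> a2" using a12 e by auto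
  define p1 where "p1 = vof V a1"
  define q1 where "q1 = vof V (\<iota> a1)"
  define p2 where "p2 = vof V a2"
  define q2 where "q2 = vof V (\<iota> a2)"
  obtain u1 u2 where u: "u1 \<in> {a1, \<iota> a1}" "u2 \<in> {a2, \<iota> a2}"
    and cfg: "vof V u1 = vof V (\<iota> u1) \<or> vof V u2 = vof V (\<iota> u2)
      \<or> {vof V u1, vof V (\<iota> u1)} = {vof V u2, vof V (\<iota> u2)}
      \<or> {vof V u1, vof V (\<iota> u1)} \<inter> {vof V u2, vof V (\<iota> u2)} = {}
      \<or> (vof V u1 = vof V u2 \<and> vof V (\<iota> u1) \<noteq> vof V (\<iota> u2))"
  proof (cases "p1 \<noteq> q1 \<and> p2 \<noteq> q2 \<and> {p1, q1} \<noteq> {p2, q2} \<and> {p1, q1} \<inter> {p2, q2} \<noteq> {}")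
    case True
    then obtain z where z: "z \<in> {p1, q1}" "z \<in> {p2, q2}" by blast
    define u1 where "u1 = (if p1 = z then a1 else \<iota> a1)"
    define u2 where "u2 = (if p2 = z then a2 else \<iota> a2)"
    have v1: "vof V u1 = z" "vof V (\<iota> u1) = (if p1 = z then q1 else p1)"
      using z(1) b(6) unfolding u1_def p1_def q1_def by auto
    have v2: "vof V u2 = z" "vof V (\<iota> u2) = (if p2 = z then q2 else p2)"
      using z(2) b(6) unfolding u2_def p2_def q2_def by auto
    have "vof V (\<iota> u1) \<noteq> vof V (\<iota> u2)"
      using True z unfolding v1 v2 by auto
    then show thesis using that[of u1 u2] v1 v2 by (simp add: u1_def u2_def)
  next
    case False
    then have "p1 = q1 \<or> p2 = q2 \<or> {p1, q1} = {p2, q2} \<or> {p1, q1} \<inter> {p2, q2} = {}" by blast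
    then show thesis using that[of a1 a2] unfolding p1_def q1_def p2_def q2_def by blast
  qed
  have ib2: "\<iota> b2 \<in> {a2, \<iota> a2}" using b2(2) b(6) by auto
  have bd: "b1 \<noteq> b2" "b1 \<noteq> \<iota> b2" using b1(2) b2(2) ib2 a12 d by auto
  have u2b: "u2 \<in> {b2, \<iota> b2}" "u1 \<in> {b1, \<iota> b1}" using u b1(2) b2(2) b(6) by auto
  define T0 where "T0 = T - {a1, a2} \<union> {u1, u2}"
  define T0' where "T0' = T' - {b2, b1} \<union> {u2, u1}"
  note R1 = retail[OF co wf a1 a2 a12 u]
  note R2 = retail[OF co wf' b2(1) b1(1) bd u2b]
  have wf0: "ograph_wf Op (V, \<iota>, T0, c)" using R1(1) unfolding T0_def .
  have wf0': "ograph_wf Op (V, \<iota>, T0', c)" using R2(1) unfolding T0'_def .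
  have uT: "u1 \<in> T0" "u1 \<in> T0'" "u2 \<in> T0" "u2 \<in> T0'" unfolding T0_def T0'_def by auto
  have iu1: "\<iota> u1 \<in> {a1, \<iota> a1}" using u(1) b(6) by auto
  have u12: "u2 \<noteq> u1" "u2 \<noteq> \<iota> u1" using u iu1 a12 d by auto
  have X: "DD cmp (V, \<iota>, T0, c) u1 u2 + fscale ((-1) ^ card (T0 - T0')) (DD cmp (V, \<iota>, T0', c) u2 u1) \<in> fspan (og_rel Op ren)"
    by (rule DC0[OF co wf0 wf0' uT(1,2) uT(3,4) u12 cfg])
  define E where "E = {a1, \<iota> a1, a2, \<iota> a2}"
  have TE: "T \<inter> E = {a1, a2}" using a1 a2 t1 t2 unfolding E_def by auto
  have T'E: "T' \<inter> E = {b1, b2}"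
  proof -
    have "\<iota> b1 \<notin> T'" "\<iota> b2 \<notin> T'" using t1' t2' by auto
    moreover have "E = {b1, \<iota> b1, b2, \<iota> b2}" using b1(2) b2(2) b(6) unfolding E_def by auto
    ultimately show ?thesis using b1(1) b2(1) by auto
  qed
  have uE: "u1 \<in> E" "u2 \<in> E" "b1 \<in> E" "b2 \<in> E" "a1 \<in> E" "a2 \<in> E" using u b1(2) b2(2) unfolding E_def by auto
  have T0E: "T0 - E = T - E" "T0 \<inter> E = {u1, u2}" using TE uE unfolding T0_def by blast+
  have T0'E: "T0' - E = T' - E" "T0' \<inter> E = {u1, u2}" using T'E uE unfolding T0'_def by blast+
  have diff0: "T0 - T0' = (T - T') - E" using T0E T0'E by blast
  have diff1: "(T - T') \<inter> E = {a1, a2} - T'" using TE by blast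
  have finT: "finite T" using b(8) finite_hedges[OF wf] finite_subset by blast
  have cardT: "card (T - T') = card (T0 - T0') + card ({a1, a2} - T')"
  proof -
    have "T - T' = ((T - T') - E) \<union> ((T - T') \<inter> E)" by blast
    then have "card (T - T') = card ((T - T') - E) + card ((T - T') \<inter> E)"
      by (metis Diff_Diff_Int Diff_disjoint card_Un_disjoint finT finite_Diff finite_Int inf_commute)
    then show ?thesis unfolding diff0 diff1 .
  qed
  have a1T': "a1 \<in> T' \<longleftrightarrow> b1 = a1" using b1 t1' b(6) by auto
  have a2T': "a2 \<in> T' \<longleftrightarrow> b2 = a2" using b2 t2' b(6) by auto
  have pw: "((-1::real) ^ card ({a1, a2} - T')) = sgb (a1 = b1) * sgb (a2 = b2)"
  proof -
    have "card ({a1, a2} - T') = (if a1 \<in> T' then 0 else 1) + (if a2 \<in> T' then 0 else 1)"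
      using a12 by (cases "a1 \<in> T'"; cases "a2 \<in> T'") (simp_all add: insert_Diff_if)
    then show ?thesis unfolding a1T' a2T' by (auto simp: sgb_def)
  qed
  have s1: "sgb (u1 = a1) = sgb (a1 = b1) * sgb (u1 = b1)"
    by (rule sgb_tri) (use u b1 t1 in auto)
  have s2: "sgb (u2 = a2) = sgb (a2 = b2) * sgb (u2 = b2)"
    by (rule sgb_tri) (use u b2 t2 in auto)
  have DD1: "DD cmp (V, \<iota>, T, c) a1 a2 = fscale (sgb (u1 = a1) * sgb (u2 = a2)) (DD cmp (V, \<iota>, T0, c) u1 u2)"
    using R1(2) unfolding T0_def sgb_def .
  have DD2: "DD cmp (V, \<iota>, T', c) b2 b1 = fscale (sgb (u2 = b2) * sgb (u1 = b1)) (DD cmp (V, \<iota>, T0', c) u2 u1)"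
    using R2(2) unfolding T0'_def sgb_def .
  have eq: "DD cmp (V, \<iota>, T, c) a1 a2 + fscale ((-1) ^ card (T - T')) (DD cmp (V, \<iota>, T', c) b2 b1)
      = fscale (sgb (u1 = a1) * sgb (u2 = a2))
         (DD cmp (V, \<iota>, T0, c) u1 u2 + fscale ((-1) ^ card (T0 - T0')) (DD cmp (V, \<iota>, T0', c) u2 u1))"
    unfolding DD1 DD2 cardT power_add pw fscale_add fscale_fscale s1 s2
    by (simp add: algebra_simps)
  show ?thesis unfolding eq by (rule fspan_fscale[OF X])
qed


lemma card2_diff: "a \<noteq> b \<Longrightarrow> card ({a, b} - S) = (if a \<in> S then 0 else 1) + (if b \<in> S then 0 else 1)"
  by (cases "a \<in> S"; cases "b \<in> S") (simp_all add: insert_Diff_if)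

lemma RC:
  assumes wf: "ograph_wf Op (V, \<iota>, T, c)"
    and xy: "x \<in> hedges V" "y \<in> hedges V" "x \<noteq> y" "x \<noteq> \<iota> y"
    and xy': "x' \<in> hedges V - {x, y}" "y' \<in> hedges V - {x, y}" "x' \<noteq> y'" "x' \<noteq> riota \<iota> x y y'"
    and T2: "T2 = (((T - {x, \<iota> x, y, \<iota> y}) \<union> {\<iota> x, y}) - {x', riota \<iota> x y x', y', riota \<iota> x y y'}) \<union> {riota \<iota> x y x', y'}"
    and U2: "U2 = (((T - {x', \<iota> x', y', \<iota> y'}) \<union> {\<iota> x', y'}) - {x, riota \<iota> x' y' x, y, riota \<iota> x' y' y}) \<union> {riota \<iota> x' y' x, y}"
  shows "x' \<noteq> \<iota> y'" "x \<in> hedges V - {x', y'}" "y \<in> hedges V - {x', y'}" "x \<noteq> riota \<iota> x' y' y"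
    "riota (riota \<iota> x y) x' y' = riota (riota \<iota> x' y') x y"
    "y \<in> T2" "y' \<in> T2" "y \<in> U2" "y' \<in> U2"
    "y' \<noteq> y" "y' \<noteq> riota (riota \<iota> x y) x' y' y"
    "rs (V, \<iota>, T, c) x y * rs (rgl (V, \<iota>, T, c) x y) x' y'
      = (-1) ^ card (T2 - U2) * (rs (V, \<iota>, T, c) x' y' * rs (rgl (V, \<iota>, T, c) x' y') x y)"
proof -
  note b = wf_basic[OF wf]
  have inv: "\<iota> (\<iota> h) = h" for h by (rule b(6))
  have e: "\<iota> u = v \<longleftrightarrow> u = \<iota> v" for u v using inv by auto
  have xH': "x' \<in> hedges V" "y' \<in> hedges V" using xy' by auto
  have fx: "x \<noteq> \<iota> x" "y \<noteq> \<iota> y" "x' \<noteq> \<iota> x'" "y' \<noteq> \<iota> y'"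
    using b(5)[OF xy(1)] b(5)[OF xy(2)] b(5)[OF xH'(1)] b(5)[OF xH'(2)] by metis+
  have d0: "\<iota> x \<noteq> y" "\<iota> x \<noteq> \<iota> y" using xy e by auto
  have pq: "x' \<noteq> x" "x' \<noteq> y" "y' \<noteq> x" "y' \<noteq> y" using xy' by auto
  have rab: "riota \<iota> u v h = (if h = u then v else if h = v then u else if h = \<iota> u then \<iota> v else if h = \<iota> v then \<iota> u else \<iota> h)" for u v h
    by (simp add: riota_def)
  have nb: "\<not> (x' = \<iota> x \<and> y' = \<iota> y)" "\<not> (x' = \<iota> y \<and> y' = \<iota> x)"
    using xy'(4) pq fx d0 unfolding rab by auto
  have c1: "x' \<noteq> \<iota> y'" using xy'(4) pq fx d0 unfolding rab by (auto split: if_splits) (metis inv)+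
  show "x' \<noteq> \<iota> y'" by (rule c1)
  show "x \<in> hedges V - {x', y'}" "y \<in> hedges V - {x', y'}" using xy pq by auto
  show "y' \<noteq> y" using pq by simp
  show "x \<noteq> riota \<iota> x' y' y"
    using nb pq fx d0 c1 xy unfolding rab by (auto simp: inv e)
  show "riota (riota \<iota> x y) x' y' = riota (riota \<iota> x' y') x y"
  proof
    fix h show "riota (riota \<iota> x y) x' y' h = riota (riota \<iota> x' y') x y h"
      using nb pq fx d0 c1 xy xy' unfolding riota_def by (auto simp: inv e)
  qed
  show "y' \<noteq> riota (riota \<iota> x y) x' y' y"
    using nb pq fx d0 c1 xy unfolding riota_def by (auto simp: inv e)
  show "y \<in> T2" "y' \<in> T2" "y \<in> U2" "y' \<in> U2"
    unfolding T2 U2 riota_def using nb pq fx d0 c1 xy by (auto simp: inv e)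
  show "rs (V, \<iota>, T, c) x y * rs (rgl (V, \<iota>, T, c) x y) x' y'
      = (-1) ^ card (T2 - U2) * (rs (V, \<iota>, T, c) x' y' * rs (rgl (V, \<iota>, T, c) x' y') x y)"
  proof -
    have tl: "\<iota> x \<in> T \<longleftrightarrow> x \<notin> T" "\<iota> y \<in> T \<longleftrightarrow> y \<notin> T" "\<iota> x' \<in> T \<longleftrightarrow> x' \<notin> T" "\<iota> y' \<in> T \<longleftrightarrow> y' \<notin> T"
      using b(9)[OF xy(1)] b(9)[OF xy(2)] b(9)[OF xH'(1)] b(9)[OF xH'(2)] by blast+
    have k1y: "x \<noteq> riota \<iota> x' y' y" using nb pq fx d0 c1 xy unfolding riota_def by (auto simp: inv e)
    have r1: "rs (V, \<iota>, T, c) x y = (-1) ^ ((if x \<in> T then 0 else 1) + (if \<iota> y \<in> T then 0 else 1))"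
      by (simp add: rs_simp card2_diff[OF xy(4)])
    have r2: "rs (V, \<iota>, T, c) x' y' = (-1) ^ ((if x' \<in> T then 0 else 1) + (if \<iota> y' \<in> T then 0 else 1))"
      by (simp add: rs_simp card2_diff[OF c1])
    define T1 where "T1 = (T - {x, \<iota> x, y, \<iota> y}) \<union> {\<iota> x, y}"
    define U1 where "U1 = (T - {x', \<iota> x', y', \<iota> y'}) \<union> {\<iota> x', y'}"
    have r3: "rs (rgl (V, \<iota>, T, c) x y) x' y' = (-1) ^ ((if x' \<in> T1 then 0 else 1) + (if riota \<iota> x y y' \<in> T1 then 0 else 1))"
      by (simp add: rs_simp rgl_simp2 card2_diff[OF xy'(4)] T1_def)
    have r4: "rs (rgl (V, \<iota>, T, c) x' y') x y = (-1) ^ ((if x \<in> U1 then 0 else 1) + (if riota \<iota> x' y' y \<in> U1 then 0 else 1))"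
      by (simp add: rs_simp rgl_simp2 card2_diff[OF k1y] U1_def)
    have sg: "(-1::real) ^ n = (-1) ^ m \<Longrightarrow> (-1::real) ^ n' = (-1) ^ m' \<Longrightarrow> (-1::real) ^ n * (-1) ^ n' = (-1) ^ m * (-1) ^ m'" for n m n' m'
      by simp
    consider (G) "x' \<noteq> \<iota> x" "x' \<noteq> \<iota> y" "y' \<noteq> \<iota> x" "y' \<noteq> \<iota> y" | (Q1) "y' = \<iota> x" | (Q2) "y' = \<iota> y"
      | (P1) "x' = \<iota> x" | (P2) "x' = \<iota> y" by blast
    then show ?thesis
    proof cases
      case G
      have s: "x \<noteq> \<iota> x'" "y \<noteq> \<iota> x'" "x \<noteq> \<iota> y'" "y \<noteq> \<iota> y'" "\<iota> x \<noteq> \<iota> y'" "\<iota> y \<noteq> \<iota> y'"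
        "\<iota> x' \<noteq> \<iota> x" "\<iota> x' \<noteq> \<iota> y"
        using G pq e by metis+
      have v1: "riota \<iota> x y y' = \<iota> y'" using G pq by (simp add: riota_def)
      have v2: "riota \<iota> x' y' y = \<iota> y" using s pq by (simp add: riota_def)
      have m: "x' \<in> T1 \<longleftrightarrow> x' \<in> T" "\<iota> y' \<in> T1 \<longleftrightarrow> y' \<notin> T" "x \<in> U1 \<longleftrightarrow> x \<in> T" "\<iota> y \<in> U1 \<longleftrightarrow> y \<notin> T"
        unfolding T1_def U1_def using G pq s fx tl by auto
      have "T2 - U2 = {}" unfolding T2 U2 riota_def using G nb pq fx d0 c1 xy s by (auto simp: inv)
      then have cd: "card (T2 - U2) = 0" by (metis card.empty)
      show ?thesis unfolding r1 r2 r3 r4 v1 v2 m cd tl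
        by (cases "x \<in> T"; cases "y \<in> T"; cases "x' \<in> T"; cases "y' \<in> T") simp_all
    next
      case Q1
      have s: "x' \<noteq> \<iota> x" "x' \<noteq> \<iota> y" "y \<noteq> \<iota> x'" "\<iota> y \<noteq> \<iota> x'" "\<iota> x' \<noteq> x"
        using Q1 nb pq xy'(3) e by metis+
      have v1: "riota \<iota> x y y' = \<iota> y" using Q1 pq fx d0 xy by (simp add: riota_def)
      have v2: "riota \<iota> x' y' y = \<iota> y" using Q1 s pq fx d0 inv xy by (simp add: riota_def)
      have m: "x' \<in> T1 \<longleftrightarrow> x' \<in> T" "\<iota> y \<notin> T1" "x \<notin> U1" "\<iota> y \<in> U1 \<longleftrightarrow> y \<notin> T"
        unfolding T1_def U1_def using Q1 pq s fx d0 tl inv xy by auto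
      have "T2 - U2 = {}" unfolding T2 U2 riota_def using Q1 nb pq fx d0 c1 xy s by (auto simp: inv)
      then have cd: "card (T2 - U2) = 0" by (metis card.empty)
      show ?thesis unfolding r1 r2 r3 r4 v1 v2 cd unfolding Q1 inv tl using m
        by (cases "x \<in> T"; cases "y \<in> T"; cases "x' \<in> T") simp_all
    next
      case Q2
      have s: "x' \<noteq> \<iota> x" "x' \<noteq> \<iota> y" "x \<noteq> \<iota> x'" "\<iota> x \<noteq> \<iota> x'" "\<iota> x' \<noteq> y"
        using Q2 nb pq xy'(3) e by metis+
      have v1: "riota \<iota> x y y' = \<iota> x" using Q2 pq fx d0 xy by (simp add: riota_def)
      have v2: "riota \<iota> x' y' y = \<iota> x'" using Q2 s pq fx d0 inv xy by (simp add: riota_def)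
      have m: "x' \<in> T1 \<longleftrightarrow> x' \<in> T" "\<iota> x \<in> T1" "x \<in> U1 \<longleftrightarrow> x \<in> T" "\<iota> x' \<in> U1"
        unfolding T1_def U1_def using Q2 pq s fx d0 tl inv xy by auto
      have "T2 - U2 = {\<iota> x'}" unfolding T2 U2 riota_def using Q2 nb pq fx d0 c1 xy s by (auto simp: inv)
      then have cd: "card (T2 - U2) = 1" by simp
      show ?thesis unfolding r1 r2 r3 r4 v1 v2 cd unfolding Q2 inv tl using m
        by (cases "x \<in> T"; cases "y \<in> T"; cases "x' \<in> T") simp_all
    next
      case P1
      have s: "y' \<noteq> \<iota> x" "y' \<noteq> \<iota> y" "y \<noteq> \<iota> y'" "\<iota> y \<noteq> \<iota> y'" "\<iota> y' \<noteq> x" "\<iota> y' \<noteq> \<iota> x"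
        using P1 nb pq xy'(3) e by metis+
      have v1: "riota \<iota> x y y' = \<iota> y'" using s pq by (simp add: riota_def)
      have v2: "riota \<iota> x' y' y = \<iota> y" using P1 s pq fx d0 inv xy by (simp add: riota_def)
      have m: "\<iota> x \<in> T1" "\<iota> y' \<in> T1 \<longleftrightarrow> y' \<notin> T" "x \<in> U1" "\<iota> y \<in> U1 \<longleftrightarrow> y \<notin> T"
        unfolding T1_def U1_def using P1 pq s fx d0 tl inv xy by auto
      have "T2 - U2 = {\<iota> y}" unfolding T2 U2 riota_def using P1 nb pq fx d0 c1 xy s by (auto simp: inv)
      then have cd: "card (T2 - U2) = 1" by simp
      show ?thesis unfolding r1 r2 r3 r4 v1 v2 cd unfolding P1 inv tl using m
        by (cases "x \<in> T"; cases "y \<in> T"; cases "y' \<in> T") simp_all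
    next
      case P2
      have s: "y' \<noteq> \<iota> x" "y' \<noteq> \<iota> y" "x \<noteq> \<iota> y'" "\<iota> x \<noteq> \<iota> y'" "\<iota> y' \<noteq> y" "\<iota> y' \<noteq> \<iota> y"
        using P2 nb pq xy'(3) e by metis+
      have v1: "riota \<iota> x y y' = \<iota> y'" using s pq by (simp add: riota_def)
      have v2: "riota \<iota> x' y' y = \<iota> y'" using P2 s pq fx d0 inv xy by (simp add: riota_def)
      have m: "\<iota> y \<notin> T1" "\<iota> y' \<in> T1 \<longleftrightarrow> y' \<notin> T" "x \<in> U1 \<longleftrightarrow> x \<in> T" "\<iota> y' \<notin> U1"
        unfolding T1_def U1_def using P2 pq s fx d0 tl inv xy by auto
      have "T2 - U2 = {}" unfolding T2 U2 riota_def using P2 nb pq fx d0 c1 xy s by (auto simp: inv)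
      then have cd: "card (T2 - U2) = 0" by (metis card.empty)
      show ?thesis unfolding r1 r2 r3 r4 v1 v2 cd unfolding P2 inv tl using m
        by (cases "x \<in> T"; cases "y \<in> T"; cases "y' \<in> T") simp_all
    qed
  qed
qed


lemma riota_sym: "riota \<iota> x y = riota \<iota> y x"
  by (auto simp: riota_def fun_eq_iff)

lemma rgl2: "rgl (rgl (V, \<iota>, T, c) x y) x' y' =
   (V, riota (riota \<iota> x y) x' y',
    (((T - {x, \<iota> x, y, \<iota> y}) \<union> {\<iota> x, y}) - {x', riota \<iota> x y x', y', riota \<iota> x y y'}) \<union> {riota \<iota> x y x', y'}, c)"
  by (simp add: rgl_simp2)

lemma lin_ext_dH_dH:
  "lin_ext (dH cmp) (dH cmp X) = (\<Sum>(x, y)\<in>Pset X. fscale (rs X x y) (lin_ext (dH cmp) (contract cmp (rgl X x y) y)))"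
  unfolding dH_eq[of cmp X]
  by (subst lin_ext_sum) (auto simp: case_prod_beta lin_ext_fscale intro!: sum.cong)

lemma HH:
  assumes co: "cyclic_operad Op cmp ren un" and wf: "ograph_wf Op (V, \<iota>, T, c)"
  shows "lin_ext (dH cmp) (dH cmp (V, \<iota>, T, c)) \<in> fspan (og_rel Op ren)"
proof -
  let ?X = "(V, \<iota>, T, c)"
  let ?P = "Pset ?X"
  define B where "B = (\<lambda>(x, y). Pt V (riota \<iota> x y) y)"
  define F where "F = (\<lambda>((x, y), (x', y')). fscale (rs ?X x y * rs (rgl ?X x y) x' y') (DD cmp (rgl (rgl ?X x y) x' y') y y'))"
  have finH: "finite (hedges V)" by (rule finite_hedges[OF wf])
  have finP: "finite ?P" by (rule finite_Pset[OF wf])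
  have finB: "finite (B p)" for p
    unfolding B_def Pt_def by (rule finite_subset[of _ "hedges V \<times> hedges V"]) (use finH in \<open>auto split: prod.splits\<close>)
  have step: "fscale (rs ?X x y) (lin_ext (dH cmp) (contract cmp (rgl ?X x y) y)) = (\<Sum>q\<in>B (x, y). F ((x, y), q))"
    if xy: "(x, y) \<in> ?P" for x y
  proof -
    have a: "x \<in> hedges V" "y \<in> hedges V" "x \<noteq> y" "x \<noteq> \<iota> y" using xy by (auto simp: Pset_simp)
    have wf1: "ograph_wf Op (V, riota \<iota> x y, (T - {x, \<iota> x, y, \<iota> y}) \<union> {\<iota> x, y}, c)"
      using wf_rgl[OF wf a] by (simp add: rgl_simp2)
    have yT: "y \<in> (T - {x, \<iota> x, y, \<iota> y}) \<union> {\<iota> x, y}" by simp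
    show ?thesis
      unfolding rgl_simp2 LH[OF co wf1 yT] fscale_sum B_def F_def
      by (simp add: case_prod_beta rgl_simp2)
  qed
  have "lin_ext (dH cmp) (dH cmp ?X) = (\<Sum>p\<in>?P. \<Sum>q\<in>B p. F (p, q))"
    unfolding lin_ext_dH_dH by (rule sum.cong[OF refl]) (auto simp: step)
  also have "\<dots> = (\<Sum>pq\<in>Sigma ?P B. F pq)"
    using sum.Sigma[OF finP, of B "\<lambda>p q. F (p, q)"] finB by simp
  also have "\<dots> \<in> fspan (og_rel Op ren)"
  proof (rule sum_involution_span[where \<phi> = "\<lambda>(p, q). (q, p)"])
    show "finite (Sigma ?P B)" using finP finB by auto
    show "(\<lambda>(p, q). (q, p)) ((\<lambda>(p, q). (q, p)) i) = i" for i by (simp add: case_prod_beta)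
    fix i assume i: "i \<in> Sigma ?P B"
    obtain x y x' y' where ie: "i = ((x, y), (x', y'))" by (metis prod.collapse)
    have a: "x \<in> hedges V" "y \<in> hedges V" "x \<noteq> y" "x \<noteq> \<iota> y" using i ie by (auto simp: Pset_simp)
    have rxy: "riota \<iota> x y y = x" using a by (simp add: riota_def)
    have a': "x' \<in> hedges V - {x, y}" "y' \<in> hedges V - {x, y}" "x' \<noteq> y'" "x' \<noteq> riota \<iota> x y y'"
      using i ie rxy by (auto simp: B_def Pt_def)
    define T2 where "T2 = (((T - {x, \<iota> x, y, \<iota> y}) \<union> {\<iota> x, y}) - {x', riota \<iota> x y x', y', riota \<iota> x y y'}) \<union> {riota \<iota> x y x', y'}"
    define U2 where "U2 = (((T - {x', \<iota> x', y', \<iota> y'}) \<union> {\<iota> x', y'}) - {x, riota \<iota> x' y' x, y, riota \<iota> x' y' y}) \<union> {riota \<iota> x' y' x, y}"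
    note rc = RC[OF wf a a' T2_def U2_def]
    have rxy': "riota \<iota> x' y' y' = x'" using rc(1) a' by (simp add: riota_def)
    show "(\<lambda>(p, q). (q, p)) i \<in> Sigma ?P B"
      using ie rc(1-4) a a' rxy' by (auto simp: Pset_simp B_def Pt_def)
    define J where "J = riota (riota \<iota> x y) x' y'"
    have W2: "rgl (rgl ?X x y) x' y' = (V, J, T2, c)" unfolding rgl2 J_def T2_def ..
    have W2': "rgl (rgl ?X x' y') x y = (V, J, U2, c)" unfolding rgl2 J_def T2_def U2_def rc(5) ..
    have wf1: "ograph_wf Op (rgl ?X x y)" by (rule wf_rgl[OF wf a])
    have wf1': "ograph_wf Op (rgl ?X x' y')" by (rule wf_rgl[OF wf]) (use rc(1) a' in auto)
    have wfW: "ograph_wf Op (V, J, T2, c)"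
    proof -
      have w: "ograph_wf Op (V, riota \<iota> x y, (T - {x, \<iota> x, y, \<iota> y}) \<union> {\<iota> x, y}, c)"
        using wf1 by (simp only: rgl_simp2)
      have "ograph_wf Op (rgl (V, riota \<iota> x y, (T - {x, \<iota> x, y, \<iota> y}) \<union> {\<iota> x, y}, c) x' y')"
        by (rule wf_rgl[OF w]) (use a' in auto)
      then show ?thesis unfolding W2[symmetric] by (simp only: rgl_simp2)
    qed
    have wfW': "ograph_wf Op (V, J, U2, c)"
    proof -
      have w: "ograph_wf Op (V, riota \<iota> x' y', (T - {x', \<iota> x', y', \<iota> y'}) \<union> {\<iota> x', y'}, c)"
        using wf1' by (simp only: rgl_simp2)
      have "ograph_wf Op (rgl (V, riota \<iota> x' y', (T - {x', \<iota> x', y', \<iota> y'}) \<union> {\<iota> x', y'}, c) x y)"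
        by (rule wf_rgl[OF w]) (use a rc(2-4) in auto)
      then show ?thesis unfolding W2'[symmetric] by (simp only: rgl_simp2)
    qed
    have D: "DD cmp (V, J, T2, c) y y' + fscale ((-1) ^ card (T2 - U2)) (DD cmp (V, J, U2, c) y' y) \<in> fspan (og_rel Op ren)"
      by (rule DCG[OF co wfW wfW' rc(6) rc(7) rc(10) rc(11)[folded J_def] rc(8)]) (use rc(9) in auto)
    let ?A = "rs ?X x y * rs (rgl ?X x y) x' y'"
    let ?A' = "rs ?X x' y' * rs (rgl ?X x' y') x y"
    have ss: "((-1::real) ^ card (T2 - U2)) * ((-1) ^ card (T2 - U2)) = 1" by (simp flip: power_add mult_2)
    have AA: "?A' = (-1) ^ card (T2 - U2) * ?A" using rc(12) ss by (simp add: algebra_simps)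
    have "F i + F ((\<lambda>(p, q). (q, p)) i) = fscale ?A (DD cmp (V, J, T2, c) y y' + fscale ((-1) ^ card (T2 - U2)) (DD cmp (V, J, U2, c) y' y))"
      unfolding ie F_def by (simp add: W2 W2' AA fscale_add mult.commute)
    then show "F i + F ((\<lambda>(p, q). (q, p)) i) \<in> fspan (og_rel Op ren)"
      using fspan_fscale[OF D] by simp
  qed
  finally show ?thesis .
qed

lemma riota_iota:
  assumes "\<And>h. \<iota> (\<iota> h) = h" "x \<noteq> \<iota> x" "y \<noteq> \<iota> y"
  shows "riota \<iota> (\<iota> x) (\<iota> y) = riota \<iota> x y"
  using assms by (auto simp: riota_def fun_eq_iff)

lemma HE:
  assumes co: "cyclic_operad Op cmp ren un" and wf: "ograph_wf Op (V, \<iota>, T, c)"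
  shows "lin_ext (dH cmp) (dE cmp (V, \<iota>, T, c)) + lin_ext (dE cmp) (dH cmp (V, \<iota>, T, c)) \<in> fspan (og_rel Op ren)"
proof -
  let ?X = "(V, \<iota>, T, c)"
  let ?P = "Pset ?X"
  note b = wf_basic[OF wf]
  have e: "\<iota> a = b \<longleftrightarrow> a = \<iota> b" for a b using b(6) by auto
  have finH: "finite (hedges V)" by (rule finite_hedges[OF wf])
  have finP: "finite ?P" by (rule finite_Pset[OF wf])
  have finT: "finite T" using b(8) finH finite_subset by blast
  define T1 where "T1 = (\<lambda>x y. (T - {x, \<iota> x, y, \<iota> y}) \<union> {\<iota> x, y})"
  have rglT1: "rgl ?X x y = (V, riota \<iota> x y, T1 x y, c)" for x y by (simp add: rgl_simp2 T1_def)
  have wf1: "ograph_wf Op (V, riota \<iota> x y, T1 x y, c)" if "(x, y) \<in> ?P" for x y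
    using wf_rgl[OF wf, of x y] that rglT1[of x y] by (auto simp: Pset_simp)
  define I1 where "I1 = Sigma T (\<lambda>t. Pt V \<iota> t)"
  define I2 where "I2 = Sigma ?P (\<lambda>p. T - {fst p, \<iota> (fst p), snd p, \<iota> (snd p)})"
  define F1 where "F1 = (\<lambda>(t, (x, y)). fscale (rs ?X x y) (DD cmp (rgl ?X x y) t y))"
  define F2 where "F2 = (\<lambda>((x, y), t). fscale (rs ?X x y) (DD cmp (rgl ?X x y) y t))"
  define F3 where "F3 = (\<lambda>(x, y). fscale (rs ?X x y) (DD cmp (rgl ?X x y) y (\<iota> x)))"
  have finPt: "finite (Pt V \<iota> t)" for t
    unfolding Pt_def by (rule finite_subset[of _ "hedges V \<times> hedges V"]) (use finH in auto)
  have part1: "lin_ext (dH cmp) (dE cmp ?X) = (\<Sum>i\<in>I1. F1 i)"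
  proof -
    have "lin_ext (dH cmp) (dE cmp ?X) = (\<Sum>t\<in>T. lin_ext (dH cmp) (contract cmp ?X t))"
      unfolding dE_eq by (rule lin_ext_sum) simp
    also have "\<dots> = (\<Sum>t\<in>T. \<Sum>q\<in>Pt V \<iota> t. F1 (t, q))"
      by (rule sum.cong[OF refl]) (simp add: LH[OF co wf] F1_def case_prod_beta)
    also have "\<dots> = (\<Sum>i\<in>I1. F1 i)"
      unfolding I1_def using sum.Sigma[OF finT, of "\<lambda>t. Pt V \<iota> t" "\<lambda>t q. F1 (t, q)"] finPt by simp
    finally show ?thesis .
  qed
  have part2: "lin_ext (dE cmp) (dH cmp ?X) = (\<Sum>i\<in>I2. F2 i) + (\<Sum>p\<in>?P. F3 p)"
  proof -
    have "lin_ext (dE cmp) (dH cmp ?X) = (\<Sum>(x, y)\<in>?P. fscale (rs ?X x y) (lin_ext (dE cmp) (contract cmp (rgl ?X x y) y)))"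
      unfolding dH_eq[of cmp ?X]
      by (subst lin_ext_sum) (auto simp: case_prod_beta lin_ext_fscale intro!: sum.cong)
    also have "\<dots> = (\<Sum>(x, y)\<in>?P. (\<Sum>t\<in>T - {x, \<iota> x, y, \<iota> y}. F2 ((x, y), t)) + F3 (x, y))"
    proof (rule sum.cong[OF refl], clarify)
      fix x y assume xy: "(x, y) \<in> ?P"
      have a: "x \<in> hedges V" "y \<in> hedges V" "x \<noteq> y" "x \<noteq> \<iota> y" using xy by (auto simp: Pset_simp)
      have fd: "\<iota> x \<noteq> y" using a(4) e by auto
      have split: "T1 x y - {y} = insert (\<iota> x) (T - {x, \<iota> x, y, \<iota> y})" unfolding T1_def using fd by auto
      have "lin_ext (dE cmp) (contract cmp (rgl ?X x y) y) = (\<Sum>t\<in>T1 x y - {y}. DD cmp (rgl ?X x y) y t)"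
        unfolding rglT1 LE ..
      also have "\<dots> = DD cmp (rgl ?X x y) y (\<iota> x) + (\<Sum>t\<in>T - {x, \<iota> x, y, \<iota> y}. DD cmp (rgl ?X x y) y t)"
        unfolding split by (rule sum.insert) (use finT in auto)
      finally show "fscale (rs ?X x y) (lin_ext (dE cmp) (contract cmp (rgl ?X x y) y))
          = (\<Sum>t\<in>T - {x, \<iota> x, y, \<iota> y}. F2 ((x, y), t)) + F3 (x, y)"
        by (simp add: F2_def F3_def fscale_add fscale_sum add.commute)
    qed
    also have "\<dots> = (\<Sum>(x, y)\<in>?P. \<Sum>t\<in>T - {x, \<iota> x, y, \<iota> y}. F2 ((x, y), t)) + (\<Sum>p\<in>?P. F3 p)"
      by (simp add: sum.distrib case_prod_beta)
    also have "(\<Sum>(x, y)\<in>?P. \<Sum>t\<in>T - {x, \<iota> x, y, \<iota> y}. F2 ((x, y), t)) = (\<Sum>i\<in>I2. F2 i)"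
      unfolding I2_def using sum.Sigma[OF finP, of "\<lambda>p. T - {fst p, \<iota> (fst p), snd p, \<iota> (snd p)}" "\<lambda>p t. F2 (p, t)"] finT
      by (simp add: case_prod_beta)
    finally show ?thesis .
  qed
  have S12: "(\<Sum>i\<in>I1. F1 i) + (\<Sum>i\<in>I2. F2 i) \<in> fspan (og_rel Op ren)"
  proof (rule sum_bij_span[where \<phi> = "\<lambda>(t, p). (p, t)"])
    show "bij_betw (\<lambda>(t, p). (p, t)) I1 I2"
    proof (rule bij_betwI[where g = "\<lambda>(p, t). (t, p)"])
      show "(\<lambda>(t, p). (p, t)) \<in> I1 \<rightarrow> I2"
      proof
        fix i assume "i \<in> I1"
        then obtain t x y where i: "i = (t, (x, y))" "t \<in> T" "x \<in> hedges V - {t, \<iota> t}" "y \<in> hedges V - {t, \<iota> t}" "x \<noteq> y" "x \<noteq> \<iota> y"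
          unfolding I1_def Pt_def by auto
        have "t \<noteq> \<iota> x" "t \<noteq> \<iota> y" using i e by auto
        then show "(\<lambda>(t, p). (p, t)) i \<in> I2" using i unfolding I2_def by (auto simp: Pset_simp)
      qed
      show "(\<lambda>(p, t). (t, p)) \<in> I2 \<rightarrow> I1"
      proof
        fix i assume i2: "i \<in> I2"
        obtain x y t where ie: "i = ((x, y), t)" by (metis prod.collapse)
        have i: "i = ((x, y), t)" "t \<in> T" "x \<in> hedges V" "y \<in> hedges V" "x \<noteq> y" "x \<noteq> \<iota> y"
            "t \<notin> {x, \<iota> x, y, \<iota> y}"
          using i2 ie unfolding I2_def by (auto simp: Pset_simp)
        have "x \<noteq> \<iota> t" "y \<noteq> \<iota> t" using i e by auto
        then show "(\<lambda>(p, t). (t, p)) i \<in> I1" using i unfolding I1_def Pt_def by auto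
      qed
    qed auto
    fix i assume "i \<in> I1"
    then obtain t x y where i: "i = (t, (x, y))" "t \<in> T" "x \<in> hedges V - {t, \<iota> t}" "y \<in> hedges V - {t, \<iota> t}" "x \<noteq> y" "x \<noteq> \<iota> y"
      unfolding I1_def Pt_def by auto
    have xyP: "(x, y) \<in> ?P" using i by (auto simp: Pset_simp)
    have to: "t \<notin> {x, y, \<iota> x, \<iota> y}" using i e by auto
    have tT1: "t \<in> T1 x y" "y \<in> T1 x y" using i to unfolding T1_def by auto
    have yt: "y \<noteq> t" "y \<noteq> riota \<iota> x y t" using i to by (auto simp: riota_def)
    have D: "DD cmp (V, riota \<iota> x y, T1 x y, c) t y + fscale ((-1) ^ card (T1 x y - T1 x y)) (DD cmp (V, riota \<iota> x y, T1 x y, c) y t) \<in> fspan (og_rel Op ren)"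
      by (rule DCG[OF co wf1[OF xyP] wf1[OF xyP] tT1 yt tT1(1) _ tT1(2)]) auto
    have "F1 i + F2 ((\<lambda>(t, p). (p, t)) i) = fscale (rs ?X x y) (DD cmp (V, riota \<iota> x y, T1 x y, c) t y + fscale ((-1) ^ card (T1 x y - T1 x y)) (DD cmp (V, riota \<iota> x y, T1 x y, c) y t))"
      unfolding i F1_def F2_def by (simp add: rglT1 fscale_add)
    then show "F1 i + F2 ((\<lambda>(t, p). (p, t)) i) \<in> fspan (og_rel Op ren)"
      using fspan_fscale[OF D] by simp
  qed
  have S3: "(\<Sum>p\<in>?P. F3 p) \<in> fspan (og_rel Op ren)"
  proof (rule sum_involution_span[OF finP, where \<phi> = "\<lambda>(x, y). (\<iota> x, \<iota> y)"])
    fix p assume "p \<in> ?P"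
    then obtain x y where p: "p = (x, y)" "x \<in> hedges V" "y \<in> hedges V" "x \<noteq> y" "x \<noteq> \<iota> y"
      by (auto simp: Pset_simp)
    have ih: "\<iota> x \<in> hedges V" "\<iota> y \<in> hedges V" "\<iota> x \<noteq> \<iota> y" "\<iota> x \<noteq> \<iota> (\<iota> y)"
      using p b(4) e by auto
    show "(\<lambda>(x, y). (\<iota> x, \<iota> y)) p \<in> ?P" using p ih by (simp add: Pset_simp)
    show "(\<lambda>(x, y). (\<iota> x, \<iota> y)) ((\<lambda>(x, y). (\<iota> x, \<iota> y)) p) = p" using p b(6) by simp
    have xyP: "(x, y) \<in> ?P" using p by (simp add: Pset_simp)
    have xyP': "(\<iota> x, \<iota> y) \<in> ?P" using ih by (simp add: Pset_simp)
    have fd: "\<iota> x \<noteq> y" "x \<noteq> \<iota> x" "y \<noteq> \<iota> y" using p e b(5) by auto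
    have rio: "riota \<iota> (\<iota> x) (\<iota> y) = riota \<iota> x y" by (rule riota_iota[OF b(6) fd(2,3)])
    have T1': "T1 (\<iota> x) (\<iota> y) = (T - {x, \<iota> x, y, \<iota> y}) \<union> {x, \<iota> y}" unfolding T1_def using b(6) by auto
    have wfW': "ograph_wf Op (V, riota \<iota> x y, T1 (\<iota> x) (\<iota> y), c)" using wf1[OF xyP'] rio by simp
    have c1: "y \<in> T1 x y" "\<iota> x \<in> T1 x y" "\<iota> x \<noteq> y" "\<iota> x \<noteq> riota \<iota> x y y"
      using fd p by (auto simp: T1_def riota_def)
    have c2: "x \<in> T1 (\<iota> x) (\<iota> y)" "x \<in> {y, riota \<iota> x y y}" "\<iota> y \<in> T1 (\<iota> x) (\<iota> y)" "\<iota> y \<in> {\<iota> x, riota \<iota> x y (\<iota> x)}"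
      unfolding T1' using fd p by (auto simp: riota_def)
    have D: "DD cmp (V, riota \<iota> x y, T1 x y, c) y (\<iota> x) + fscale ((-1) ^ card (T1 x y - T1 (\<iota> x) (\<iota> y))) (DD cmp (V, riota \<iota> x y, T1 (\<iota> x) (\<iota> y), c) (\<iota> y) x) \<in> fspan (og_rel Op ren)"
      by (rule DCG[OF co wf1[OF xyP] wfW' c1 c2])
    have cd: "T1 x y - T1 (\<iota> x) (\<iota> y) = {\<iota> x, y}" unfolding T1' using fd p ih by (auto simp: T1_def)
    have cd2: "card {\<iota> x, y} = 2" using fd by simp
    have rss: "rs ?X (\<iota> x) (\<iota> y) = rs ?X x y"
    proof -
      have tx: "x \<in> T \<longleftrightarrow> \<iota> x \<notin> T" using b(9) p(2) by blast
      have ty: "y \<in> T \<longleftrightarrow> \<iota> y \<notin> T" using b(9) p(3) by blast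
      have d1: "\<iota> x \<noteq> y" using fd by simp
      have "rs ?X (\<iota> x) (\<iota> y) = (-1) ^ card ({\<iota> x, y} - T)" by (simp add: rs_simp b(6))
      also have "\<dots> = (-1) ^ card ({x, \<iota> y} - T)"
        unfolding card2_diff[OF d1] card2_diff[OF p(5)] using tx ty by auto
      finally show ?thesis by (simp add: rs_simp)
    qed
    have "F3 p + F3 ((\<lambda>(x, y). (\<iota> x, \<iota> y)) p) = fscale (rs ?X x y) (DD cmp (V, riota \<iota> x y, T1 x y, c) y (\<iota> x) + fscale ((-1) ^ card (T1 x y - T1 (\<iota> x) (\<iota> y))) (DD cmp (V, riota \<iota> x y, T1 (\<iota> x) (\<iota> y), c) (\<iota> y) x))"
      unfolding p F3_def cd cd2 using rglT1 rio rss b(6) by (simp add: fscale_add)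
    then show "F3 p + F3 ((\<lambda>(x, y). (\<iota> x, \<iota> y)) p) \<in> fspan (og_rel Op ren)"
      using fspan_fscale[OF D] by simp
  qed
  show ?thesis unfolding part1 part2 using fspan_add[OF S12 S3] by (simp add: add.assoc)
qed

lemma lin_comb:
  assumes A: "\<forall>r\<in>A. \<exists>X. r = gen X" and D1: "\<And>X. fsupp (D1 X)"
  shows "lin_ext D2 (lin_ext D1 (\<Sum>r\<in>A. fscale (cf r) r)) = (\<Sum>r\<in>A. fscale (cf r) (lin_ext D2 (lin_ext D1 r)))"
proof -
  have fr: "fsupp r" if "r \<in> A" for r using A that by auto
  have f1: "fsupp (lin_ext D1 r)" if "r \<in> A" for r using A that D1 by auto
  have "lin_ext D1 (\<Sum>r\<in>A. fscale (cf r) r) = (\<Sum>r\<in>A. fscale (cf r) (lin_ext D1 r))"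
    by (subst lin_ext_sum) (auto simp: fr lin_ext_fscale intro!: sum.cong)
  then show ?thesis
    by (simp, subst lin_ext_sum) (auto simp: f1 lin_ext_fscale intro!: sum.cong)
qed

theorem lemma2p37:
  fixes Op :: "'h set \<Rightarrow> 'v::real_vector set"
    and cmp :: "'h set \<Rightarrow> 'h \<Rightarrow> 'h set \<Rightarrow> 'h \<Rightarrow> 'v \<Rightarrow> 'v \<Rightarrow> 'v"
    and ren :: "('h \<Rightarrow> 'h) \<Rightarrow> 'h set \<Rightarrow> 'v \<Rightarrow> 'v"
    and un :: "'h \<Rightarrow> 'h \<Rightarrow> 'v"
  assumes "cyclic_operad Op cmp ren un"
    and "finite_dimensional_components Op"
  shows "\<forall>f\<in>fspan (og_gens Op).
           lin_ext (dH cmp) (lin_ext (dH cmp) f) \<in> fspan (og_rel Op ren)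
         \<and> lin_ext (dH cmp) (lin_ext (dE cmp) f) + lin_ext (dE cmp) (lin_ext (dH cmp) f)
             \<in> fspan (og_rel Op ren)"
proof
  note co = assms(1)
  fix f assume "f \<in> fspan (og_gens Op)"
  then obtain A cf where A: "finite A" "A \<subseteq> og_gens Op" and f: "f = (\<Sum>r\<in>A. fscale (cf r) r)"
    unfolding fspan_def by blast
  have gA: "\<forall>r\<in>A. \<exists>X. r = gen X" using A(2) unfolding og_gens_def by blast
  have wfA: "\<exists>V \<iota> T c. r = gen (V, \<iota>, T, c) \<and> ograph_wf Op (V, \<iota>, T, c)" if "r \<in> A" for r
    using A(2) that unfolding og_gens_def by force
  have hh: "lin_ext (dH cmp) (lin_ext (dH cmp) r) \<in> fspan (og_rel Op ren)" if "r \<in> A" for r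
    using wfA[OF that] HH[OF co] by auto
  have he: "lin_ext (dH cmp) (lin_ext (dE cmp) r) + lin_ext (dE cmp) (lin_ext (dH cmp) r) \<in> fspan (og_rel Op ren)"
    if "r \<in> A" for r
    using wfA[OF that] HE[OF co] by auto
  have e1: "lin_ext (dH cmp) (lin_ext (dH cmp) f) = (\<Sum>r\<in>A. fscale (cf r) (lin_ext (dH cmp) (lin_ext (dH cmp) r)))"
    unfolding f by (rule lin_comb[OF gA]) simp
  have e2: "lin_ext (dH cmp) (lin_ext (dE cmp) f) + lin_ext (dE cmp) (lin_ext (dH cmp) f)
      = (\<Sum>r\<in>A. fscale (cf r) (lin_ext (dH cmp) (lin_ext (dE cmp) r) + lin_ext (dE cmp) (lin_ext (dH cmp) r)))"
    unfolding f lin_comb[OF gA fsupp_dE] lin_comb[OF gA fsupp_dH] fscale_add sum.distrib ..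
  show "lin_ext (dH cmp) (lin_ext (dH cmp) f) \<in> fspan (og_rel Op ren)
      \<and> lin_ext (dH cmp) (lin_ext (dE cmp) f) + lin_ext (dE cmp) (lin_ext (dH cmp) f) \<in> fspan (og_rel Op ren)"
    unfolding e1 e2 using hh he by (auto intro!: fspan_sum fspan_fscale)
qed


end
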